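(* In the setting described in the context, suppose that $J$ satisfies $\sup_{|i-j|\le R}|J_{i,j}|<\infty$ for every $R\ge0$. Let $(n_k)_{k\ge0}$ be an increasing sequence of positive integers, and suppose there is a compact set $K\subset\mathbb{R}$ with $\operatorname{supp}(\mu)\subset K$ and $\operatorname{supp}(\nu_{n_k})\subset K$ for all $k$. If \[ \sup_{k\ge0}\frac1{n_k}\int_{\mathbb{R}}|K_{n_k}(x,x)|\,d\mu(x)<\infty, \] then $\lim_{k\to\infty}\big|\int f\,d\nu_{n_k}-\int f\,d\eta_{n_k}\big|=0$ for every continuous function $f$ on $K$. In particular, for every probability measure $\nu_\infty$ supported on $K$, $\nu_{n_k}\to\nu_\infty$ weakly if and only if $\eta_{n_k}\to\nu_\infty$ weakly (weak convergence meaning convergence of integrals of all bounded continuous functions on $\mathbb{R}$).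
   Context: Let $r\ge1$ and let $\mu_1,\dots,\mu_r$ be positive Borel measures on $\mathbb{R}$ with all moments finite, forming a perfect system: for every $\vec n\in\mathbb{N}_0^r$ there is a monic polynomial $P_{\vec n}$ of degree $|\vec n|=n_1+\dots+n_r$ with $\int x^kP_{\vec n}\,d\mu_j=0$ for $0\le k\le n_j-1$, $1\le j\le r$. Type I polynomials $A_{\vec n}=(A_{\vec n,1},\dots,A_{\vec n,r})$: $\deg A_{\vec n,j}\le n_j-1$, $\sum_j\int x^kA_{\vec n,j}\,d\mu_j=0$ for $0\le k\le|\vec n|-2$, and $=1$ for $k=|\vec n|-1$. Let $\mu$ be a positive measure with $\mu_j\ll\mu$, $w_j=d\mu_j/d\mu$, $Q_{\vec n}=\sum_jA_{\vec n,j}w_j$. Fix a path $(\vec n_\ell)_{\ell\ge0}$ with $|\vec n_\ell|=\ell$, $\vec n_{\ell+1}=\vec n_\ell+\vec e_{i_\ell}$ ($\vec e_j$ the $j$-th unit vector), and set $p_\ell=P_{\vec n_\ell}$, $q_\ell=Q_{\vec n_{\ell+1}}$, so that $\int p_\ell q_{\ell'}\,d\mu=\delta_{\ell,\ell'}$. The Christoffel--Darboux kernel is $K_n(x,y)=\sum_{j=0}^{n-1}p_j(x)q_j(y)$. Define $\nu_n=\frac1n\sum_{y:\,p_n(y)=0}\delta_y$ (zeros counted with multiplicity) and the signed measure $d\eta_n(x)=\frac1nK_n(x,x)\,d\mu(x)$. The matrix $J=[J_{\ell,k}]_{\ell,k\ge0}$ is defined by $xp_\ell=\sum_{k=0}^{\ell+1}J_{\ell,k}p_k$,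 $J_{\ell,k}=0$ for $k>\ell+1$. *)

theory Defs
  imports "HOL-Probability.Probability" "HOL-Computational_Algebra.Polynomial"
begin

text \<open>Multi-indices with r components are functions nat => nat vanishing at j >= r;
  components are indexed 0..r-1 (the paper's 1..r).\<close>

definition msize :: "nat \<Rightarrow> (nat \<Rightarrow> nat) \<Rightarrow> nat" where
  "msize r n = (\<Sum>j<r. n j)"

definition typeII :: "(nat \<Rightarrow> real measure) \<Rightarrow> nat \<Rightarrow> (nat \<Rightarrow> nat) \<Rightarrow> real poly \<Rightarrow> bool" where
  "typeII mu r n P \<longleftrightarrow> lead_coeff P = 1 \<and> degree P = msize r n \<and>
     (\<forall>j<r. \<forall>k<n j. (\<integral>x. x ^ k * poly P x \<partial>mu j) = 0)"

definition perfect_system :: "(nat \<Rightarrow> real measure) \<Rightarrow> nat \<Rightarrow> bool" where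
  "perfect_system mu r \<longleftrightarrow> (\<forall>n. (\<forall>j\<ge>r. n j = 0) \<longrightarrow> (\<exists>!P. typeII mu r n P))"

definition PII :: "(nat \<Rightarrow> real measure) \<Rightarrow> nat \<Rightarrow> (nat \<Rightarrow> nat) \<Rightarrow> real poly" where
  "PII mu r n = (THE P. typeII mu r n P)"

definition typeI :: "(nat \<Rightarrow> real measure) \<Rightarrow> nat \<Rightarrow> (nat \<Rightarrow> nat) \<Rightarrow> (nat \<Rightarrow> real poly) \<Rightarrow> bool" where
  "typeI mu r n A \<longleftrightarrow> (\<forall>j\<ge>r. A j = 0) \<and> (\<forall>j<r. A j = 0 \<or> degree (A j) < n j) \<and>
     (\<forall>k<msize r n. (\<Sum>j<r. \<integral>x. x ^ k * poly (A j) x \<partial>mu j) =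
        (if k = msize r n - 1 then 1 else 0))"

definition AI :: "(nat \<Rightarrow> real measure) \<Rightarrow> nat \<Rightarrow> (nat \<Rightarrow> nat) \<Rightarrow> nat \<Rightarrow> real poly" where
  "AI mu r n = (THE A. typeI mu r n A)"

definition QI :: "(nat \<Rightarrow> real measure) \<Rightarrow> (nat \<Rightarrow> real \<Rightarrow> real) \<Rightarrow> nat \<Rightarrow> (nat \<Rightarrow> nat) \<Rightarrow> real \<Rightarrow> real" where
  "QI mu w r n x = (\<Sum>j<r. poly (AI mu r n j) x * w j x)"

text \<open>The path: n_0 = 0, n_{l+1} = n_l + e_{i l}; so component j of n_l counts the steps m < l with i m = j.\<close>
definition pathv :: "(nat \<Rightarrow> nat) \<Rightarrow> nat \<Rightarrow> nat \<Rightarrow> nat" where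
  "pathv i l j = card {m. m < l \<and> i m = j}"

definition pp :: "(nat \<Rightarrow> real measure) \<Rightarrow> nat \<Rightarrow> (nat \<Rightarrow> nat) \<Rightarrow> nat \<Rightarrow> real poly" where
  "pp mu r i l = PII mu r (pathv i l)"

definition qq :: "(nat \<Rightarrow> real measure) \<Rightarrow> (nat \<Rightarrow> real \<Rightarrow> real) \<Rightarrow> nat \<Rightarrow> (nat \<Rightarrow> nat) \<Rightarrow> nat \<Rightarrow> real \<Rightarrow> real" where
  "qq mu w r i l x = QI mu w r (pathv i (Suc l)) x"

definition CD :: "(nat \<Rightarrow> real measure) \<Rightarrow> (nat \<Rightarrow> real \<Rightarrow> real) \<Rightarrow> nat \<Rightarrow> (nat \<Rightarrow> nat) \<Rightarrow> nat \<Rightarrow> real \<Rightarrow> real \<Rightarrow> real" where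
  "CD mu w r i n x y = (\<Sum>j<n. poly (pp mu r i j) x * qq mu w r i j y)"

text \<open>Integral of f against nu_n (normalized zero counting measure of p_n, with multiplicity;
  used only when all zeros of p_n are real).\<close>
definition nu_int :: "(nat \<Rightarrow> real measure) \<Rightarrow> nat \<Rightarrow> (nat \<Rightarrow> nat) \<Rightarrow> nat \<Rightarrow> (real \<Rightarrow> real) \<Rightarrow> real" where
  "nu_int mu r i n f =
     (\<Sum>y\<in>{y. poly (pp mu r i n) y = 0}. real (order y (pp mu r i n)) * f y) / real n"

text \<open>Integral of f against the signed measure eta_n = (1/n) K_n(x,x) dmu(x), restricted
  to K (which carries mu).\<close>
definition eta_int :: "real measure \<Rightarrow> (nat \<Rightarrow> real measure) \<Rightarrow> (nat \<Rightarrow> real \<Rightarrow> real) \<Rightarrow> nat \<Rightarrow> (nat \<Rightarrow> nat)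
     \<Rightarrow> real set \<Rightarrow> nat \<Rightarrow> (real \<Rightarrow> real) \<Rightarrow> real" where
  "eta_int M mu w r i K n f = (LINT x:K|M. CD mu w r i n x x * f x) / real n"

definition Jm :: "(nat \<Rightarrow> real measure) \<Rightarrow> nat \<Rightarrow> (nat \<Rightarrow> nat) \<Rightarrow> nat \<Rightarrow> nat \<Rightarrow> real" where
  "Jm mu r i l = (THE c. (\<forall>k>Suc l. c k = 0) \<and>
      [:0, 1:] * pp mu r i l = (\<Sum>k\<le>Suc l. smult (c k) (pp mu r i k)))"

end

theory Submission
  imports Defs "HOL-Computational_Algebra.Fundamental_Theorem_Algebra"
begin

definition vanish :: "nat \<Rightarrow> real poly \<Rightarrow> bool" where
  "vanish N g \<longleftrightarrow> (\<forall>k\<ge>N. coeff g k = 0)"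

definition graded :: "(nat \<Rightarrow> real poly) \<Rightarrow> bool" where
  "graded b \<longleftrightarrow> (\<forall>l. degree (b l) = l \<and> lead_coeff (b l) = 1)"

lemma vanish_iff: "vanish N g \<longleftrightarrow> (g = 0 \<or> degree g < N)"
  unfolding vanish_def
proof
  assume a: "\<forall>k\<ge>N. coeff g k = 0"
  show "g = 0 \<or> degree g < N"
  proof (rule ccontr)
    assume "\<not> (g = 0 \<or> degree g < N)"
    then have "g \<noteq> 0" "degree g \<ge> N" by auto
    then show False using a by auto
  qed
qed (auto simp: coeff_eq_0)

lemma vanish_add: "vanish N g \<Longrightarrow> vanish N h \<Longrightarrow> vanish N (g + h)"
  by (simp add: vanish_def)
lemma vanish_diff: "vanish N g \<Longrightarrow> vanish N h \<Longrightarrow> vanish N (g - h)"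
  by (simp add: vanish_def)
lemma vanish_smult: "vanish N g \<Longrightarrow> vanish N (smult a g)"
  by (simp add: vanish_def)
lemma vanish_sum: "(\<And>s. s \<in> S \<Longrightarrow> vanish N (g s)) \<Longrightarrow> vanish N (\<Sum>s\<in>S. g s)"
  by (induction S rule: infinite_finite_induct) (auto simp: vanish_def coeff_sum)
lemma vanish_mono: "vanish N g \<Longrightarrow> N \<le> N' \<Longrightarrow> vanish N' g"
  by (simp add: vanish_def)

lemma graded_coeff: "graded b \<Longrightarrow> coeff (b l) l = 1 \<and> degree (b l) = l"
  unfolding graded_def by metis

lemma graded_vanish: "graded b \<Longrightarrow> l < N \<Longrightarrow> vanish N (b l)"
  unfolding vanish_iff graded_def by auto

lemma graded_ne: "graded b \<Longrightarrow> b l \<noteq> 0"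
  unfolding graded_def by (metis leading_coeff_0_iff zero_neq_one)

lemma graded_span: "graded b \<Longrightarrow> vanish N g \<Longrightarrow> \<exists>c. g = (\<Sum>l<N. smult (c l) (b l))"
proof (induction N arbitrary: g)
  case 0
  then show ?case by (auto simp: vanish_def poly_eq_iff)
next
  case (Suc N)
  define a where "a = coeff g N"
  define h where "h = g - smult a (b N)"
  have bN: "degree (b N) = N" "coeff (b N) N = 1" using graded_coeff[OF Suc.prems(1)] by auto
  have "vanish N h"
    unfolding vanish_def
  proof (intro allI impI)
    fix k assume "k \<ge> N"
    show "coeff h k = 0"
    proof (cases "k = N")
      case True then show ?thesis by (simp add: h_def a_def bN)
    next
      case False
      then have "k > N" using \<open>k \<ge> N\<close> by simp
      then have "coeff g k = 0" "coeff (b N) k = 0" using Suc.prems(2) bN(1)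
        by (auto simp: vanish_def coeff_eq_0)
      then show ?thesis by (simp add: h_def)
    qed
  qed
  then obtain c where c: "h = (\<Sum>l<N. smult (c l) (b l))" using Suc by blast
  define c' where "c' = c(N := a)"
  have "(\<Sum>l<Suc N. smult (c' l) (b l)) = (\<Sum>l<N. smult (c l) (b l)) + smult a (b N)"
    by (simp add: c'_def)
  also have "\<dots> = g" using c by (simp add: h_def)
  finally show ?case by metis
qed

lemma graded_indep: "graded b \<Longrightarrow> (\<Sum>l<N. smult (c l) (b l)) = 0 \<Longrightarrow> l < N \<Longrightarrow> c l = 0"
proof (induction N)
  case 0 then show ?case by simp
next
  case (Suc N)
  have "coeff (\<Sum>l<Suc N. smult (c l) (b l)) N = c N"
  proof -
    have "coeff (\<Sum>l<N. smult (c l) (b l)) N = 0"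
      using vanish_sum[of "{..<N}" N "\<lambda>l. smult (c l) (b l)"] graded_vanish[OF Suc.prems(1)]
      by (auto simp: vanish_def intro: vanish_smult)
    moreover have "coeff (b N) N = 1" using graded_coeff[OF Suc.prems(1)] by auto
    ultimately show ?thesis by (simp add: coeff_sum)
  qed
  then have "c N = 0" using Suc.prems(2) by (metis coeff_0)
  then have "(\<Sum>l<N. smult (c l) (b l)) = 0" using Suc.prems(2) by simp
  then show ?case using Suc by (cases "l = N") (auto simp: \<open>c N = 0\<close>)
qed

lemma smult_sum2: "smult a (\<Sum>i\<in>S. f i) = (\<Sum>i\<in>S. smult a (f i))"
  by (induction S rule: infinite_finite_induct) (auto simp: smult_add_right)

definition coord :: "(nat \<Rightarrow> real poly) \<Rightarrow> nat \<Rightarrow> real poly \<Rightarrow> nat \<Rightarrow> real" where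
  "coord b N g = (THE c. (\<forall>l\<ge>N. c l = 0) \<and> g = (\<Sum>l<N. smult (c l) (b l)))"

lemma coord_prop:
  assumes "graded b" "g = (\<Sum>l<N. smult (c l) (b l))"
  shows "(\<forall>l\<ge>N. coord b N g l = 0) \<and> g = (\<Sum>l<N. smult (coord b N g l) (b l))
     \<and> (\<forall>l<N. coord b N g l = c l)"
proof -
  define c' where "c' l = (if l < N then c l else 0)" for l
  have ex: "(\<forall>l\<ge>N. c' l = 0) \<and> g = (\<Sum>l<N. smult (c' l) (b l))"
    using assms(2) by (auto simp: c'_def)
  have uniq: "d = c'" if "(\<forall>l\<ge>N. d l = 0) \<and> g = (\<Sum>l<N. smult (d l) (b l))" for d
  proof
    fix l
    have "(\<Sum>l<N. smult (d l - c' l) (b l)) = 0"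
      using that ex by (simp add: smult_diff_left sum_subtractf)
    then show "d l = c' l"
      using graded_indep[OF assms(1), where N=N and c="\<lambda>l. d l - c' l" and l=l] that ex
      by (cases "l < N") auto
  qed
  have "coord b N g = c'" unfolding coord_def
    by (rule the_equality, rule ex, rule uniq, assumption)
  then show ?thesis using ex by (auto simp: c'_def)
qed

lemma coord_unique: "graded b \<Longrightarrow> g = (\<Sum>l<N. smult (c l) (b l)) \<Longrightarrow> l < N \<Longrightarrow> coord b N g l = c l"
  using coord_prop by blast

lemma coord_expand: "graded b \<Longrightarrow> vanish N g \<Longrightarrow> g = (\<Sum>l<N. smult (coord b N g l) (b l))"
  using coord_prop graded_span by metis

lemma coord_lin:
  assumes "graded b" "finite S" "\<And>s. s \<in> S \<Longrightarrow> vanish N (g s)" "l < N"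
  shows "coord b N (\<Sum>s\<in>S. smult (a s) (g s)) l = (\<Sum>s\<in>S. a s * coord b N (g s) l)"
proof -
  have "(\<Sum>s\<in>S. smult (a s) (g s)) = (\<Sum>s\<in>S. smult (a s) (\<Sum>l<N. smult (coord b N (g s) l) (b l)))"
    using coord_expand[OF assms(1) assms(3)] by (intro sum.cong refl) metis
  also have "\<dots> = (\<Sum>l<N. smult (\<Sum>s\<in>S. a s * coord b N (g s) l) (b l))"
  proof -
    have "(\<Sum>s\<in>S. smult (a s) (\<Sum>l<N. smult (coord b N (g s) l) (b l)))
        = (\<Sum>s\<in>S. \<Sum>l<N. smult (a s * coord b N (g s) l) (b l))"
      by (simp only: smult_sum2 smult_smult)
    also have "\<dots> = (\<Sum>l<N. \<Sum>s\<in>S. smult (a s * coord b N (g s) l) (b l))"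
      by (rule sum.swap)
    also have "\<dots> = (\<Sum>l<N. smult (\<Sum>s\<in>S. a s * coord b N (g s) l) (b l))"
      by (simp only: smult_sum)
    finally show ?thesis .
  qed
  finally show ?thesis by (rule coord_unique[OF assms(1) _ assms(4)])
qed

definition trc :: "(nat \<Rightarrow> real poly) \<Rightarrow> nat \<Rightarrow> (real poly \<Rightarrow> real poly) \<Rightarrow> real" where
  "trc b N T = (\<Sum>l<N. coord b N (T (b l)) l)"

lemma lin_sum:
  assumes "\<forall>g h. T (g + h) = T g + T h" "\<forall>a g. T (smult a g) = smult a (T g)"
  shows "T (\<Sum>s\<in>S. smult (a s) (g s)) = (\<Sum>s\<in>S. smult (a s) (T (g s)))"
proof (induction S rule: infinite_finite_induct)
  case (infinite A) 
  have "T 0 = 0" using assms(2)[rule_format, of 0 0] by simp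
  then show ?case using infinite by simp
next
  case empty
  have "T 0 = 0" using assms(2)[rule_format, of 0 0] by simp
  then show ?case by simp
next
  case (insert x F) then show ?case using assms by simp
qed

lemma trc_invariant:
  assumes b: "graded b" and v: "graded v"
    and T: "\<forall>g. vanish N g \<longrightarrow> vanish N (T g)"
      "\<forall>g h. T (g + h) = T g + T h" "\<forall>a g. T (smult a g) = smult a (T g)"
  shows "trc b N T = trc v N T"
proof -
  have Tv: "vanish N (T (v s))" if "s < N" for s using T(1) graded_vanish[OF v that] by blast
  have "trc b N T = (\<Sum>l<N. \<Sum>s<N. coord v N (b l) s * coord b N (T (v s)) l)"
    unfolding trc_def
  proof (rule sum.cong[OF refl])
    fix l assume l: "l \<in> {..<N}"
    have "T (b l) = T (\<Sum>s<N. smult (coord v N (b l) s) (v s))"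
      using coord_expand[OF v graded_vanish[OF b]] l by auto
    also have "\<dots> = (\<Sum>s<N. smult (coord v N (b l) s) (T (v s)))"
      by (rule lin_sum[OF T(2,3)])
    finally show "coord b N (T (b l)) l = (\<Sum>s<N. coord v N (b l) s * coord b N (T (v s)) l)"
      using coord_lin[OF b, where S="{..<N}" and g="\<lambda>s. T (v s)" and a="\<lambda>s. coord v N (b l) s" and l=l and N=N] Tv l by auto
  qed
  also have "\<dots> = (\<Sum>s<N. \<Sum>l<N. coord b N (T (v s)) l * coord v N (b l) s)"
    by (subst sum.swap) (simp add: mult.commute)
  also have "\<dots> = (\<Sum>s<N. coord v N (\<Sum>l<N. smult (coord b N (T (v s)) l) (b l)) s)"
  proof (rule sum.cong[OF refl])
    fix s assume s: "s \<in> {..<N}"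
    show "(\<Sum>l<N. coord b N (T (v s)) l * coord v N (b l) s) =
        coord v N (\<Sum>l<N. smult (coord b N (T (v s)) l) (b l)) s"
      using coord_lin[OF v, where S="{..<N}" and g=b and a="\<lambda>l. coord b N (T (v s)) l" and l=s and N=N]
        graded_vanish[OF b] s by auto
  qed
  also have "\<dots> = trc v N T"
    unfolding trc_def using coord_expand[OF b Tv] by (intro sum.cong) auto
  finally show ?thesis .
qed

lemma modeq: "P \<noteq> 0 \<Longrightarrow> P dvd (g - h) \<Longrightarrow> vanish (degree P) h \<Longrightarrow> g mod P = h"
proof -
  assume P: "P \<noteq> 0" and d: "P dvd (g - h)" and v: "vanish (degree P) h"
  have "P dvd (g - h) - (g - g mod P)"
    using d dvd_minus_mod by (rule dvd_diff)
  then have d2: "P dvd (g mod P - h)" by (simp add: algebra_simps)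
  have "vanish (degree P) (g mod P)"
    using degree_mod_less[OF P, of g] unfolding vanish_iff .
  then have v2: "vanish (degree P) (g mod P - h)"
    using v by (rule vanish_diff)
  show ?thesis
  proof (rule ccontr)
    assume "g mod P \<noteq> h"
    then have ne: "g mod P - h \<noteq> 0" by simp
    then have "degree P \<le> degree (g mod P - h)" using dvd_imp_degree_le[OF d2] by blast
    then show False using v2 ne unfolding vanish_iff by linarith
  qed
qed

definition Tm :: "real poly \<Rightarrow> nat \<Rightarrow> real poly \<Rightarrow> real poly" where
  "Tm P m g = (monom 1 m * g) mod P"

lemma Tm_vanish: "P \<noteq> 0 \<Longrightarrow> vanish (degree P) (Tm P m g)"
  unfolding Tm_def vanish_iff using degree_mod_less by blast

lemma Tm_add: "P \<noteq> 0 \<Longrightarrow> Tm P m (g + h) = Tm P m g + Tm P m h"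
proof -
  assume P: "P \<noteq> 0"
  define A where "A = monom 1 m * g"
  define B where "B = monom 1 m * h"
  have "(A + B) mod P = A mod P + B mod P"
  proof (rule modeq[OF P])
    have "P dvd (A - A mod P) + (B - B mod P)" by (intro dvd_add dvd_minus_mod)
    then show "P dvd A + B - (A mod P + B mod P)" by (simp add: algebra_simps)
    show "vanish (degree P) (A mod P + B mod P)"
      using degree_mod_less[OF P] by (intro vanish_add) (unfold vanish_iff, blast)+
  qed
  then show ?thesis unfolding Tm_def A_def B_def by (simp add: distrib_left)
qed

lemma Tm_smult: "P \<noteq> 0 \<Longrightarrow> Tm P m (smult a g) = smult a (Tm P m g)"
  unfolding Tm_def
  by (simp add: mod_smult_left)

lemma monom_Suc_mult: "monom 1 (Suc m) * (g::real poly) = [:0, 1:] * (monom 1 m * g)"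
proof -
  have e: "monom 1 (Suc m) = [:0,1:] * monom (1::real) m"
    by (simp add: monom_Suc)
  show ?thesis by (simp only: e mult.assoc)
qed

lemma Tm_Suc: "P \<noteq> 0 \<Longrightarrow> Tm P (Suc m) g = ([:0,1:] * Tm P m g) mod P"
  unfolding Tm_def monom_Suc_mult
  by (rule mod_mult_right_eq[symmetric])

definition nb :: "(nat \<Rightarrow> real) \<Rightarrow> nat \<Rightarrow> real poly" where
  "nb z s = (\<Prod>t<s. [:- z t, 1:])"

lemma nb_Suc: "nb z (Suc s) = nb z s * [:- z s, 1:]"
  by (simp add: nb_def)

lemma graded_nb: "graded (nb z)"
  unfolding graded_def
proof
  fix l show "degree (nb z l) = l \<and> lead_coeff (nb z l) = 1"
  proof (induction l)
    case 0 then show ?case by (simp add: nb_def)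
  next
    case (Suc l)
    have ne: "nb z l \<noteq> 0" using Suc by auto
    have "degree (nb z (Suc l)) = degree (nb z l) + degree [:- z l, 1:]"
      unfolding nb_Suc by (rule degree_mult_eq) (use ne in auto)
    moreover have "lead_coeff (nb z (Suc l)) = lead_coeff (nb z l) * lead_coeff [:- z l, 1:]"
      unfolding nb_Suc by (rule lead_coeff_mult)
    moreover have "degree [:- z l, 1:] = 1" "lead_coeff [:- z l, 1:] = 1" by auto
    ultimately show ?case using Suc by (metis Suc_eq_plus1 mult_1)
  qed
qed

lemma nb_dvd: "s \<le> s' \<Longrightarrow> nb z s dvd nb z s'"
proof (induction s' rule: dec_induct)
  case base then show ?case by simp
next
  case (step n) show ?case unfolding nb_Suc using step(3) by (rule dvd_mult2)
qed

lemma x_nb: "[:0,1:] * nb z s = nb z (Suc s) + smult (z s) (nb z s)"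
  by (simp add: nb_Suc algebra_simps)

lemma newton_step:
  assumes N: "P = nb z N" and s: "s < N"
  shows "\<exists>h. Tm P m (nb z s) = smult (z s ^ m) (nb z s) + h \<and> nb z (Suc s) dvd h \<and> vanish N h"
proof -
  have P0: "P \<noteq> 0" unfolding N by (rule graded_ne[OF graded_nb])
  have dP: "degree P = N" unfolding N using graded_coeff[OF graded_nb] by blast
  show ?thesis
  proof (induction m)
    case 0
    have "Tm P 0 (nb z s) = nb z s"
      unfolding Tm_def using graded_coeff[OF graded_nb, of z s] s dP by (simp add: mod_poly_less)
    then show ?case by (intro exI[of _ 0]) (simp add: vanish_def)
  next
    case (Suc m)
    then obtain h where h: "Tm P m (nb z s) = smult (z s ^ m) (nb z s) + h" "nb z (Suc s) dvd h" "vanish N h"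
      by blast
    define a where "a = z s ^ m"
    define w where "w = smult a (nb z (Suc s)) + [:0,1:] * h"
    have arg: "[:0,1:] * Tm P m (nb z s) = smult (a * z s) (nb z s) + w"
      unfolding h(1) w_def a_def
      by (simp only: distrib_left mult_smult_right x_nb smult_add_right smult_smult)
    have vs: "vanish N (smult (a * z s) (nb z s))"
      using graded_vanish[OF graded_nb s] by (rule vanish_smult)
    have vw: "vanish N (w mod P)" using degree_mod_less[OF P0, of w] dP unfolding vanish_iff by simp
    have "Tm P (Suc m) (nb z s) = smult (a * z s) (nb z s) + w mod P"
      unfolding Tm_Suc[OF P0] arg
    proof (rule modeq[OF P0])
      show "P dvd smult (a * z s) (nb z s) + w - (smult (a * z s) (nb z s) + w mod P)"
        by (simp add: dvd_minus_mod)
      show "vanish (degree P) (smult (a * z s) (nb z s) + w mod P)"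
        unfolding dP using vs vw by (rule vanish_add)
    qed
    moreover have "nb z (Suc s) dvd w mod P"
    proof -
      have "nb z (Suc s) dvd w" unfolding w_def using h(2)
        by (intro dvd_add dvd_smult dvd_mult) auto
      moreover have "nb z (Suc s) dvd P" unfolding N using s by (intro nb_dvd) simp
      ultimately show ?thesis by (rule dvd_mod)
    qed
    moreover have "z s ^ m * z s = z s ^ Suc m" by simp
    ultimately show ?case using vw unfolding a_def by metis
  qed
qed

lemma newton_coord:
  assumes s: "s < N" and d: "nb z (Suc s) dvd h" and v: "vanish N h"
  shows "coord (nb z) N (smult c (nb z s) + h) s = c"
proof -
  let ?v = "nb z"
  define d where "d = coord ?v N h"
  have he: "h = (\<Sum>l<N. smult (d l) (?v l))" using coord_expand[OF graded_nb v] d_def by blast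
  have low: "d l = 0" if "l < Suc s" for l
  proof -
    define u where "u = (\<Sum>l<Suc s. smult (d l) (?v l))"
    have split: "{..<N} = {..<Suc s} \<union> {Suc s..<N}" using s by auto
    have "h = u + (\<Sum>l\<in>{Suc s..<N}. smult (d l) (?v l))"
      unfolding he u_def split by (rule sum.union_disjoint) auto
    moreover have "?v (Suc s) dvd (\<Sum>l\<in>{Suc s..<N}. smult (d l) (?v l))"
      by (rule dvd_sum) (auto intro!: dvd_smult nb_dvd)
    ultimately have du: "?v (Suc s) dvd u" using d
      by (metis add_diff_cancel_right' dvd_diff)
    have vu: "vanish (Suc s) u" unfolding u_def
      by (intro vanish_sum vanish_smult graded_vanish[OF graded_nb]) auto
    have "u = 0"
    proof (rule ccontr)
      assume "u \<noteq> 0"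
      then have "degree (?v (Suc s)) \<le> degree u" using dvd_imp_degree_le[OF du] by blast
      then show False using vu \<open>u \<noteq> 0\<close> graded_coeff[OF graded_nb, of z "Suc s"] unfolding vanish_iff by simp
    qed
    then show ?thesis using graded_indep[OF graded_nb, where N="Suc s" and c=d and l=l] that u_def by auto
  qed
  define d' where "d' = d(s := d s + c)"
  have "smult c (?v s) + h = (\<Sum>l<N. smult (d' l) (?v l))"
  proof -
    have "(\<Sum>l<N. smult (d' l) (?v l)) = (\<Sum>l<N. smult (d l) (?v l) + (if l = s then smult c (?v s) else 0))"
      by (intro sum.cong) (auto simp: d'_def smult_add_left)
    also have "\<dots> = h + smult c (?v s)" using s by (simp add: sum.distrib he)
    finally show ?thesis by simp
  qed
  then have "coord ?v N (smult c (?v s) + h) s = d' s" using coord_unique[OF graded_nb _ s] by blast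
  then show ?thesis using low[of s] by (simp add: d'_def)
qed

lemma trc_newton:
  assumes N: "P = nb z N"
  shows "trc (nb z) N (Tm P m) = (\<Sum>s<N. z s ^ m)"
  unfolding trc_def
proof (rule sum.cong[OF refl])
  fix s assume "s \<in> {..<N}"
  then have s: "s < N" by simp
  obtain h where "Tm P m (nb z s) = smult (z s ^ m) (nb z s) + h" "nb z (Suc s) dvd h" "vanish N h"
    using newton_step[OF N s] by blast
  then show "coord (nb z) N (Tm P m (nb z s)) s = z s ^ m" using newton_coord[OF s] by simp
qed

fun Jt :: "(nat \<Rightarrow> nat \<Rightarrow> real) \<Rightarrow> nat \<Rightarrow> nat \<Rightarrow> nat \<Rightarrow> nat \<Rightarrow> real" where
  "Jt J N 0 l k = (if l = k then 1 else 0)"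
| "Jt J N (Suc m) l k = (\<Sum>t<N. Jt J N m l t * J t k)"

fun Jp :: "(nat \<Rightarrow> nat \<Rightarrow> real) \<Rightarrow> nat \<Rightarrow> nat \<Rightarrow> nat \<Rightarrow> real" where
  "Jp J 0 l k = (if l = k then 1 else 0)"
| "Jp J (Suc m) l k = (\<Sum>t<Suc (l + m). Jp J m l t * J t k)"

definition hess :: "(nat \<Rightarrow> nat \<Rightarrow> real) \<Rightarrow> bool" where
  "hess J \<longleftrightarrow> (\<forall>t k. Suc t < k \<longrightarrow> J t k = 0)"

lemma Jp_zero: "hess J \<Longrightarrow> l + m < k \<Longrightarrow> Jp J m l k = 0"
proof (induction m arbitrary: k)
  case 0 then show ?case by simp
next
  case (Suc m)
  have "Jp J m l t * J t k = 0" if "t < Suc (l + m)" for t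
    using Suc.prems that unfolding hess_def by auto
  then show ?case unfolding Jp.simps by (intro sum.neutral) auto
qed

lemma Jt_zero: "hess J \<Longrightarrow> l + m < k \<Longrightarrow> Jt J N m l k = 0"
proof (induction m arbitrary: k)
  case 0 then show ?case by simp
next
  case (Suc m)
  have "Jt J N m l t * J t k = 0" for t
  proof (cases "l + m < t")
    case True then show ?thesis using Suc.IH[OF Suc.prems(1) True] by simp
  next
    case False then show ?thesis using Suc.prems unfolding hess_def by auto
  qed
  then show ?case unfolding Jt.simps by (intro sum.neutral) auto
qed

lemma Jt_eq_Jp: "hess J \<Longrightarrow> l + m \<le> N \<Longrightarrow> Jt J N m l k = Jp J m l k"
proof (induction m arbitrary: k)
  case 0 then show ?case by simp
next
  case (Suc m)
  have split: "{..<N} = {..<Suc (l + m)} \<union> {Suc (l + m)..<N}" using Suc.prems by auto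
  have "Jt J N (Suc m) l k = (\<Sum>t<Suc (l + m). Jt J N m l t * J t k) + (\<Sum>t\<in>{Suc (l + m)..<N}. Jt J N m l t * J t k)"
    unfolding Jt.simps split by (rule sum.union_disjoint) auto
  also have "(\<Sum>t\<in>{Suc (l + m)..<N}. Jt J N m l t * J t k) = 0"
    using Jt_zero[OF Suc.prems(1)] by (intro sum.neutral) auto
  also have "(\<Sum>t<Suc (l + m). Jt J N m l t * J t k) = (\<Sum>t<Suc (l + m). Jp J m l t * J t k)"
    using Suc by (intro sum.cong) auto
  finally show ?case by simp
qed

definition bandb :: "(nat \<Rightarrow> nat \<Rightarrow> real) \<Rightarrow> bool" where
  "bandb J \<longleftrightarrow> (\<forall>R::real. R \<ge> 0 \<longrightarrow> (\<exists>B. \<forall>a b. \<bar>real a - real b\<bar> \<le> R \<longrightarrow> \<bar>J a b\<bar> \<le> B))"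

lemma Jt_bound:
  assumes h: "hess J" and b: "bandb J"
  shows "\<exists>C\<ge>0. \<forall>N l k. l \<le> k + d \<longrightarrow> \<bar>Jt J N m l k\<bar> \<le> C"
proof (induction m arbitrary: d)
  case 0 show ?case by (intro exI[of _ 1]) auto
next
  case (Suc m)
  obtain C1 where C1: "C1 \<ge> 0" "\<And>N l k. l \<le> k + Suc d \<Longrightarrow> \<bar>Jt J N m l k\<bar> \<le> C1"
    using Suc.IH[of "Suc d"] by blast
  obtain B0 where B0: "\<And>a b. \<bar>real a - real b\<bar> \<le> real (d + m + 1) \<Longrightarrow> \<bar>J a b\<bar> \<le> B0"
    using b unfolding bandb_def by (metis of_nat_0_le_iff)
  define B where "B = max B0 0"
  have B: "B \<ge> 0" "\<And>a b. \<bar>real a - real b\<bar> \<le> real (d + m + 1) \<Longrightarrow> \<bar>J a b\<bar> \<le> B"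
    using B0 unfolding B_def by force+
  define S where "S k = {k - 1 .. k + d + m}" for k :: nat
  show ?case
  proof (intro exI[of _ "real (d + m + 2) * (C1 * B)"] conjI allI impI)
    show "0 \<le> real (d + m + 2) * (C1 * B)" using C1 B by simp
    fix N l k assume lk: "l \<le> k + d"
    have trm: "\<bar>Jt J N m l t * J t k\<bar> \<le> (if t \<in> S k then C1 * B else 0)" for t
    proof (cases "Jt J N m l t = 0 \<or> J t k = 0")
      case True then show ?thesis using C1 B by auto
    next
      case False
      then have t1: "t \<le> l + m" using Jt_zero[OF h, of l m t N] by force
      have t2: "k \<le> Suc t" using False h unfolding hess_def by force
      have tS: "t \<in> S k" using t1 t2 lk unfolding S_def by auto
      have "\<bar>Jt J N m l t\<bar> \<le> C1" using C1(2) t2 lk by simp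
      moreover have "\<bar>J t k\<bar> \<le> B" using t1 t2 lk by (intro B(2)) linarith
      ultimately show ?thesis using tS by (simp add: abs_mult mult_mono' C1 B)
    qed
    have "\<bar>Jt J N (Suc m) l k\<bar> \<le> (\<Sum>t<N. \<bar>Jt J N m l t * J t k\<bar>)"
      by (simp add: sum_abs)
    also have "\<dots> \<le> (\<Sum>t<N. if t \<in> S k then C1 * B else 0)"
      by (rule sum_mono) (rule trm)
    also have "\<dots> = (\<Sum>t\<in>{t\<in>{..<N}. t \<in> S k}. C1 * B)"
      by (rule sum.inter_filter[symmetric]) simp
    also have "\<dots> = real (card {t\<in>{..<N}. t \<in> S k}) * (C1 * B)" by simp
    also have "\<dots> \<le> real (d + m + 2) * (C1 * B)"
    proof (rule mult_right_mono)
      have "card {t\<in>{..<N}. t \<in> S k} \<le> card (S k)" by (rule card_mono) (auto simp: S_def)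
      also have "card (S k) \<le> d + m + 2" unfolding S_def by simp
      finally show "real (card {t\<in>{..<N}. t \<in> S k}) \<le> real (d + m + 2)" by simp
      show "0 \<le> C1 * B" using C1 B by simp
    qed
    finally show "\<bar>Jt J N (Suc m) l k\<bar> \<le> real (d + m + 2) * (C1 * B)" .
  qed
qed

lemma trace_diff_bound:
  assumes h: "hess J" and b: "bandb J"
  shows "\<exists>C. \<forall>N. \<bar>(\<Sum>j<N. Jt J N m j j) - (\<Sum>j<N. Jp J m j j)\<bar> \<le> C"
proof -
  obtain C where C: "C \<ge> 0" "\<And>N l k. l \<le> k + 0 \<Longrightarrow> \<bar>Jt J N m l k\<bar> \<le> C"
    using Jt_bound[OF h b, of 0 m] by blast
  show ?thesis
  proof (intro exI[of _ "real m * (2 * C)"] allI)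
    fix N
    have trm: "\<bar>Jt J N m j j - Jp J m j j\<bar> \<le> (if j \<in> {N - m..<N} then 2 * C else 0)" if "j < N" for j
    proof (cases "j + m \<le> N")
      case True then show ?thesis using Jt_eq_Jp[OF h True] C by simp
    next
      case False
      have "\<bar>Jt J N m j j\<bar> \<le> C" "\<bar>Jp J m j j\<bar> \<le> C"
        using C(2)[of j j N] C(2)[of j j "j + m"] Jt_eq_Jp[OF h, of j m "j + m" j] by auto
      then show ?thesis using False that by auto
    qed
    have "\<bar>(\<Sum>j<N. Jt J N m j j) - (\<Sum>j<N. Jp J m j j)\<bar> \<le> (\<Sum>j<N. \<bar>Jt J N m j j - Jp J m j j\<bar>)"
      by (simp add: sum_subtractf[symmetric] sum_abs)
    also have "\<dots> \<le> (\<Sum>j<N. if j \<in> {N - m..<N} then 2 * C else 0)"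
      by (rule sum_mono) (use trm in auto)
    also have "\<dots> = (\<Sum>j\<in>{j\<in>{..<N}. j \<in> {N - m..<N}}. 2 * C)"
      by (rule sum.inter_filter[symmetric]) simp
    also have "\<dots> = real (card {j\<in>{..<N}. j \<in> {N - m..<N}}) * (2 * C)" by simp
    also have "\<dots> \<le> real m * (2 * C)"
    proof (rule mult_right_mono)
      have "card {j\<in>{..<N}. j \<in> {N - m..<N}} \<le> card {N - m..<N}" by (rule card_mono) auto
      also have "\<dots> \<le> m" by simp
      finally show "real (card {j\<in>{..<N}. j \<in> {N - m..<N}}) \<le> real m" by simp
    qed (use C in simp)
    finally show "\<bar>(\<Sum>j<N. Jt J N m j j) - (\<Sum>j<N. Jp J m j j)\<bar> \<le> real m * (2 * C)" .
  qed
qed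

definition recb :: "(nat \<Rightarrow> real poly) \<Rightarrow> (nat \<Rightarrow> nat \<Rightarrow> real) \<Rightarrow> bool" where
  "recb pb J \<longleftrightarrow> (\<forall>k. [:0,1:] * pb k = (\<Sum>t<Suc (Suc k). smult (J k t) (pb t)))"

lemma sum_extend:
  assumes "(A::nat) \<le> B" "\<And>t. A \<le> t \<Longrightarrow> t < B \<Longrightarrow> f t = 0"
  shows "(\<Sum>t<A. f t) = (\<Sum>t<B. f t)"
  apply (rule sum.mono_neutral_left)
    apply simp
  using assms(1) apply auto[1]
  using assms(2) by (meson not_less lessThan_iff DiffE)

lemma full_identity:
  assumes h: "hess J" and r: "recb pb J"
  shows "monom 1 m * pb l = (\<Sum>k<Suc (l + m). smult (Jp J m l k) (pb k))"
proof (induction m)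
  case 0
  have "(\<Sum>k<Suc l. smult (Jp J 0 l k) (pb k)) = (\<Sum>k<Suc l. if k = l then pb k else 0)"
    by (intro sum.cong) auto
  then show ?case by simp
next
  case (Suc m)
  have "monom 1 (Suc m) * pb l = [:0,1:] * (\<Sum>t<Suc (l + m). smult (Jp J m l t) (pb t))"
    unfolding monom_Suc_mult Suc ..
  also have "\<dots> = (\<Sum>t<Suc (l + m). smult (Jp J m l t) ([:0,1:] * pb t))"
    by (simp only: sum_distrib_left mult_smult_right)
  also have "\<dots> = (\<Sum>t<Suc (l + m). smult (Jp J m l t) (\<Sum>k<Suc (Suc (l + m)). smult (J t k) (pb k)))"
  proof (intro sum.cong refl arg_cong[where f="smult _"])
    fix t assume "t \<in> {..<Suc (l + m)}"
    then have "Suc (Suc t) \<le> Suc (Suc (l + m))" by simp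
    then show "[:0,1:] * pb t = (\<Sum>k<Suc (Suc (l + m)). smult (J t k) (pb k))"
      unfolding r[unfolded recb_def, rule_format]
      by (rule sum_extend) (use h in \<open>auto simp: hess_def\<close>)
  qed
  also have "\<dots> = (\<Sum>t<Suc (l + m). \<Sum>k<Suc (Suc (l + m)). smult (Jp J m l t * J t k) (pb k))"
    by (simp only: smult_sum2 smult_smult)
  also have "\<dots> = (\<Sum>k<Suc (Suc (l + m)). \<Sum>t<Suc (l + m). smult (Jp J m l t * J t k) (pb k))"
    by (rule sum.swap)
  also have "\<dots> = (\<Sum>k<Suc (l + Suc m). smult (Jp J (Suc m) l k) (pb k))"
    by (simp only: smult_sum Jp.simps add_Suc_right)
  finally show ?case .
qed

lemma trunc_identity:
  assumes h: "hess J" and r: "recb pb J" and g: "graded pb" and l: "l < N"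
  shows "Tm (pb N) m (pb l) = (\<Sum>k<N. smult (Jt J N m l k) (pb k))"
proof (induction m)
  have P0: "pb N \<noteq> 0" by (rule graded_ne[OF g])
  have dP: "degree (pb N) = N" using graded_coeff[OF g] by blast
  case 0
  have "Tm (pb N) 0 (pb l) = pb l"
    unfolding Tm_def using graded_coeff[OF g, of l] l dP by (simp add: mod_poly_less)
  moreover have "(\<Sum>k<N. smult (Jt J N 0 l k) (pb k)) = (\<Sum>k<N. if k = l then pb k else 0)"
    by (intro sum.cong) auto
  ultimately show ?case using l by simp
next
  have P0: "pb N \<noteq> 0" by (rule graded_ne[OF g])
  have dP: "degree (pb N) = N" using graded_coeff[OF g] by blast
  case (Suc m)
  have xk: "[:0,1:] * pb k = (\<Sum>t<N. smult (J k t) (pb t)) + smult (J k N) (pb N)" if "k < N" for k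
  proof -
    have "[:0,1:] * pb k = (\<Sum>t<Suc N. smult (J k t) (pb t))"
      unfolding r[unfolded recb_def, rule_format]
      by (rule sum_extend) (use h that in \<open>auto simp: hess_def\<close>)
    then show ?thesis by simp
  qed
  define c where "c = (\<Sum>k<N. Jt J N m l k * J k N)"
  have "[:0,1:] * Tm (pb N) m (pb l) = (\<Sum>k<N. smult (Jt J N m l k) ([:0,1:] * pb k))"
    unfolding Suc by (simp add: sum_distrib_left mult_smult_right)
  also have "\<dots> = (\<Sum>k<N. smult (Jt J N m l k) ((\<Sum>t<N. smult (J k t) (pb t)) + smult (J k N) (pb N)))"
    using xk by (intro sum.cong) auto
  also have "\<dots> = (\<Sum>k<N. \<Sum>t<N. smult (Jt J N m l k * J k t) (pb t)) + smult c (pb N)"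
    by (simp only: smult_add_right smult_sum2 smult_smult sum.distrib c_def smult_sum)
  also have "(\<Sum>k<N. \<Sum>t<N. smult (Jt J N m l k * J k t) (pb t)) = (\<Sum>t<N. smult (Jt J N (Suc m) l t) (pb t))"
    by (subst sum.swap) (simp only: smult_sum Jt.simps)
  finally have e: "[:0,1:] * Tm (pb N) m (pb l) = (\<Sum>t<N. smult (Jt J N (Suc m) l t) (pb t)) + smult c (pb N)" .
  show ?case
    unfolding Tm_Suc[OF P0] e
  proof (rule modeq[OF P0])
    show "pb N dvd (\<Sum>t<N. smult (Jt J N (Suc m) l t) (pb t)) + smult c (pb N) - (\<Sum>t<N. smult (Jt J N (Suc m) l t) (pb t))"
      using dvd_smult[OF dvd_refl, of "pb N" c] by simp
    show "vanish (degree (pb N)) (\<Sum>t<N. smult (Jt J N (Suc m) l t) (pb t))"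
      unfolding dP by (intro vanish_sum vanish_smult graded_vanish[OF g]) auto
  qed
qed

lemma trc_pb:
  assumes h: "hess J" and r: "recb pb J" and g: "graded pb"
  shows "trc pb N (Tm (pb N) m) = (\<Sum>l<N. Jt J N m l l)"
  unfolding trc_def
  by (intro sum.cong refl coord_unique[OF g] trunc_identity[OF h r g]) auto

locale opset =
  fixes r :: nat and mu :: "nat \<Rightarrow> real measure" and M :: "real measure"
    and w :: "nat \<Rightarrow> real \<Rightarrow> real" and i :: "nat \<Rightarrow> nat"
  assumes sM: "sets M = sets borel"
    and wm: "\<forall>j<r. w j \<in> borel_measurable borel \<and> (\<forall>x. w j x \<ge> 0)"
    and muD: "\<forall>j<r. mu j = density M (\<lambda>x. ennreal (w j x))"
    and mom: "\<forall>j<r. \<forall>k::nat. integrable (mu j) (\<lambda>x. x ^ k)"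
    and perf: "perfect_system mu r"
    and ir: "\<forall>l. i l < r"
begin

abbreviation p where "p l \<equiv> pp mu r i l"
abbreviation nv where "nv L \<equiv> pathv i L"

lemma int_poly: assumes j: "j < r" shows "integrable (mu j) (\<lambda>x. poly Q x)"
  unfolding poly_altdef by (intro Bochner_Integration.integrable_sum integrable_mult_right) (use mom j in auto)

lemma int_pp: "j < r \<Longrightarrow> integrable (mu j) (\<lambda>x. poly Q x * poly A x)"
  using int_poly[of j "Q * A"] by (simp add: poly_mult)

lemma int_xp: "j < r \<Longrightarrow> integrable (mu j) (\<lambda>x. x ^ k * poly A x)"
  using int_poly[of j "monom 1 k * A"] by (simp add: poly_mult poly_monom)

lemma pathv_Suc: "nv (Suc L) j = nv L j + (if i L = j then 1 else 0)"
proof -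
  have "{m. m < Suc L \<and> i m = j} = {m. m < L \<and> i m = j} \<union> (if i L = j then {L} else {})"
    by (auto simp: less_Suc_eq)
  then show ?thesis unfolding pathv_def by (auto simp: card_insert_if)
qed

lemma pathv_ge: "r \<le> j \<Longrightarrow> nv L j = 0"
proof -
  assume "r \<le> j"
  then have "{m. m < L \<and> i m = j} = {}" using ir by (auto dest: leD)
  then show ?thesis unfolding pathv_def by simp
qed

lemma msize_nv: "msize r (nv L) = L"
proof (induction L)
  case 0 then show ?case by (simp add: msize_def pathv_def)
next
  case (Suc L)
  have "msize r (nv (Suc L)) = msize r (nv L) + (\<Sum>j<r. if i L = j then 1 else 0)"
    unfolding msize_def pathv_Suc by (simp add: sum.distrib)
  also have "(\<Sum>j<r. if i L = j then 1 else 0) = (1::nat)" using ir by simp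
  finally show ?case using Suc by simp
qed

lemma nv_mono: "L \<le> L' \<Longrightarrow> nv L j \<le> nv L' j"
  unfolding pathv_def by (intro card_mono) auto

lemma typeII_pp: "typeII mu r (nv L) (p L)"
proof -
  have "\<exists>!P. typeII mu r (nv L) P" using perf pathv_ge unfolding perfect_system_def by blast
  then show ?thesis unfolding pp_def PII_def by (rule theI')
qed

lemma typeII_uniq: "typeII mu r (nv L) P \<Longrightarrow> P = p L"
proof -
  assume a: "typeII mu r (nv L) P"
  have "\<exists>!P. typeII mu r (nv L) P" using perf pathv_ge unfolding perfect_system_def by blast
  then show ?thesis using a typeII_pp by blast
qed

lemma graded_p: "graded p"
  unfolding graded_def using typeII_pp msize_nv unfolding typeII_def by metis

definition pair :: "real poly \<Rightarrow> (nat \<Rightarrow> real poly) \<Rightarrow> real" where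
  "pair Q A = (\<Sum>j<r. \<integral>x. poly Q x * poly (A j) x \<partial>mu j)"

lemma pair_add: "pair (Q1 + Q2) A = pair Q1 A + pair Q2 A"
  unfolding pair_def
  by (simp add: distrib_right integral_add int_pp sum.distrib)

lemma pair_smult: "pair (smult c Q) A = c * pair Q A"
  unfolding pair_def by (simp add: sum_distrib_left mult.assoc)

lemma pair_zero: "pair 0 A = 0"
  unfolding pair_def by simp

lemma pair_sum: "pair (\<Sum>s\<in>S. smult (c s) (Q s)) A = (\<Sum>s\<in>S. c s * pair (Q s) A)"
  by (induction S rule: infinite_finite_induct) (auto simp: pair_zero pair_add pair_smult)

lemma pair_add_r: "pair Q (\<lambda>j. A j + B j) = pair Q A + pair Q B"
  unfolding pair_def
  by (simp add: distrib_left integral_add int_pp sum.distrib)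

lemma pair_diff_r: "pair Q (\<lambda>j. A j - B j) = pair Q A - pair Q B"
  unfolding pair_def
  by (simp add: right_diff_distrib integral_diff int_pp sum_subtractf)

lemma pair_smult_r: "pair Q (\<lambda>j. smult c (A j)) = c * pair Q A"
  unfolding pair_def by (simp add: sum_distrib_left mult.left_commute)

lemma poly_vanish: "vanish N g \<Longrightarrow> poly g x = (\<Sum>k<N. coeff g k * x ^ k)"
proof -
  assume v: "vanish N g"
  show ?thesis
  proof (cases "g = 0")
    case True then show ?thesis by simp
  next
    case False
    then have d: "degree g < N" using v unfolding vanish_iff by simp
    have "poly g x = (\<Sum>k<Suc (degree g). coeff g k * x ^ k)"
      unfolding poly_altdef lessThan_Suc_atMost ..
    also have "\<dots> = (\<Sum>k<N. coeff g k * x ^ k)"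
      by (rule sum_extend) (use d v in \<open>auto simp: vanish_def coeff_eq_0\<close>)
    finally show ?thesis .
  qed
qed

lemma orth_gen:
  assumes j: "j < r" and o: "\<forall>k<d. (\<integral>x. x ^ k * poly P x \<partial>mu j) = 0" and v: "vanish d g"
  shows "(\<integral>x. poly P x * poly g x \<partial>mu j) = 0"
proof -
  have "(\<integral>x. poly P x * poly g x \<partial>mu j) = (\<integral>x. (\<Sum>k<d. coeff g k * (x ^ k * poly P x)) \<partial>mu j)"
    using poly_vanish[OF v] by (simp add: sum_distrib_left sum_distrib_right mult_ac)
  also have "\<dots> = (\<Sum>k<d. coeff g k * (\<integral>x. x ^ k * poly P x \<partial>mu j))"
    using int_xp[OF j] by (simp add: Bochner_Integration.integral_sum)
  also have "\<dots> = 0" using o by simp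
  finally show ?thesis .
qed

definition inF :: "nat \<Rightarrow> (nat \<Rightarrow> real poly) \<Rightarrow> bool" where
  "inF L A \<longleftrightarrow> (\<forall>j. r \<le> j \<longrightarrow> A j = 0) \<and> (\<forall>j<r. vanish (nv L j) (A j))"

lemma orth: "inF L A \<Longrightarrow> pair (p L) A = 0"
  unfolding pair_def
proof (intro sum.neutral ballI)
  fix j assume F: "inF L A" and "j \<in> {..<r}"
  then have j: "j < r" by simp
  show "(\<integral>x. poly (p L) x * poly (A j) x \<partial>mu j) = 0"
    by (rule orth_gen[OF j, where d="nv L j"]) (use typeII_pp[of L] F j in \<open>auto simp: typeII_def inF_def\<close>)
qed

definition G :: "nat \<Rightarrow> real" where
  "G L = (\<integral>x. x ^ (nv L (i L)) * poly (p L) x \<partial>mu (i L))"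

lemma G_ne: "G L \<noteq> 0"
proof
  assume G0: "G L = 0"
  define P' where "P' = p (Suc L) + p L"
  have dg: "degree (p L) < degree (p (Suc L))" using graded_coeff[OF graded_p] by simp
  have "typeII mu r (nv (Suc L)) P'"
    unfolding typeII_def
  proof (intro conjI allI impI)
    show "lead_coeff P' = 1" unfolding P'_def using lead_coeff_add_le[OF dg] graded_coeff[OF graded_p]
      by (simp add: add.commute)
    show "degree P' = msize r (nv (Suc L))" unfolding P'_def msize_nv
      using degree_add_eq_left[OF dg] graded_coeff[OF graded_p] by simp
    fix j k assume j: "j < r" and k: "k < nv (Suc L) j"
    have "(\<integral>x. x ^ k * poly P' x \<partial>mu j) = (\<integral>x. x ^ k * poly (p (Suc L)) x \<partial>mu j) + (\<integral>x. x ^ k * poly (p L) x \<partial>mu j)"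
      unfolding P'_def by (simp add: distrib_left integral_add int_xp[OF j])
    also have "(\<integral>x. x ^ k * poly (p (Suc L)) x \<partial>mu j) = 0"
      using typeII_pp[of "Suc L"] j k unfolding typeII_def by blast
    also have "(\<integral>x. x ^ k * poly (p L) x \<partial>mu j) = 0"
    proof (cases "k < nv L j")
      case True then show ?thesis using typeII_pp[of L] j unfolding typeII_def by blast
    next
      case False
      then have "j = i L" "k = nv L (i L)" using k unfolding pathv_Suc by (auto split: if_splits)
      then show ?thesis using G0 unfolding G_def by simp
    qed
    finally show "(\<integral>x. x ^ k * poly P' x \<partial>mu j) = 0" by simp
  qed
  then have "P' = p (Suc L)" by (rule typeII_uniq)
  then have "p L = 0" unfolding P'_def by simp
  then show False using graded_ne[OF graded_p] by blast
qed

definition fL :: "nat \<Rightarrow> nat \<Rightarrow> real poly" where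
  "fL L j = (if j = i L then monom 1 (nv L (i L)) else 0)"

lemma fL_in: "inF (Suc L) (fL L)"
  unfolding inF_def fL_def
proof (intro conjI allI impI)
  fix j assume "r \<le> j" then show "(if j = i L then monom 1 (nv L (i L)) else 0) = 0"
    using ir by (metis leD)
next
  fix j assume "j < r"
  show "vanish (nv (Suc L) j) (if j = i L then monom 1 (nv L (i L)) else 0)"
    unfolding vanish_def pathv_Suc by (auto simp: coeff_monom)
qed

lemma pair_fL: "pair Q (fL L) = (\<integral>x. poly Q x * x ^ (nv L (i L)) \<partial>mu (i L))"
proof -
  have "pair Q (fL L) = (\<Sum>j<r. if j = i L then (\<integral>x. poly Q x * x ^ (nv L (i L)) \<partial>mu j) else 0)"
    unfolding pair_def fL_def by (intro sum.cong) (auto simp: poly_monom)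
  also have "\<dots> = (\<integral>x. poly Q x * x ^ (nv L (i L)) \<partial>mu (i L))"
    using ir by (simp add: sum.delta')
  finally show ?thesis .
qed

lemma pair_fL_G: "pair (p L) (fL L) = G L"
  unfolding pair_fL G_def by (simp add: mult.commute)

lemma inF_mono: "inF L A \<Longrightarrow> L \<le> L' \<Longrightarrow> inF L' A"
  unfolding inF_def using nv_mono vanish_mono by blast

lemma inF_add: "inF L A \<Longrightarrow> inF L B \<Longrightarrow> inF L (\<lambda>j. A j + B j)"
  unfolding inF_def by (auto intro: vanish_add)
lemma inF_diff: "inF L A \<Longrightarrow> inF L B \<Longrightarrow> inF L (\<lambda>j. A j - B j)"
  unfolding inF_def by (auto intro: vanish_diff)
lemma inF_smult: "inF L A \<Longrightarrow> inF L (\<lambda>j. smult c (A j))"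
  unfolding inF_def by (auto intro: vanish_smult)

lemma uniqF: "inF L A \<Longrightarrow> (\<forall>k<L. pair (p k) A = 0) \<Longrightarrow> A j = 0"
proof (induction L arbitrary: A)
  case 0
  then show ?case unfolding inF_def vanish_def pathv_def
    by (cases "r \<le> j") (auto simp: poly_eq_iff)
next
  case (Suc L)
  define d where "d = nv L (i L)"
  define c where "c = coeff (A (i L)) d"
  define A' where "A' = (\<lambda>j. A j - smult c (fL L j))"
  have iL: "i L < r" using ir by simp
  have F': "inF L A'"
    unfolding inF_def
  proof (intro conjI allI impI)
    fix j assume "r \<le> j"
    then show "A' j = 0" using Suc.prems(1) fL_in[of L] unfolding A'_def inF_def by simp
  next
    fix j assume j: "j < r"
    show "vanish (nv L j) (A' j)"
    proof (cases "j = i L")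
      case False
      have "vanish (nv (Suc L) j) (A j)" using Suc.prems(1) j unfolding inF_def by blast
      moreover have "nv (Suc L) j = nv L j" using False pathv_Suc by simp
      moreover have "A' j = A j" using False by (simp add: A'_def fL_def)
      ultimately show ?thesis by simp
    next
      case True
      have "vanish (nv (Suc L) j) (A j)" using Suc.prems(1) j unfolding inF_def by blast
      moreover have "nv (Suc L) j = Suc d" using True pathv_Suc d_def by simp
      ultimately have vA: "vanish (Suc d) (A j)" by simp
      show ?thesis unfolding vanish_def
      proof (intro allI impI)
        fix k assume "nv L j \<le> k"
        then have k: "d \<le> k" using True d_def by simp
        show "coeff (A' j) k = 0"
        proof (cases "k = d")
          case True then show ?thesis unfolding A'_def fL_def c_def using \<open>j = i L\<close> d_def
            by (simp add: coeff_monom)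
        next
          case False then have "Suc d \<le> k" using k by simp
          then show ?thesis using vA \<open>j = i L\<close> False unfolding A'_def fL_def vanish_def d_def
            by (simp add: coeff_monom)
        qed
      qed
    qed
  qed
  have "pair (p L) A' = pair (p L) A - c * G L"
    unfolding A'_def pair_diff_r pair_smult_r pair_fL_G ..
  then have "c * G L = 0" using orth[OF F'] Suc.prems(2) by simp
  then have c0: "c = 0" using G_ne by simp
  then have "A' = A" unfolding A'_def by simp
  then have "inF L A" using F' by simp
  then show ?case using Suc.IH Suc.prems(2) by simp
qed

lemma existF: "\<exists>A. inF L A \<and> (\<forall>k<L. pair (p k) A = t k)"
proof (induction L arbitrary: t)
  case 0
  show ?case by (intro exI[of _ "\<lambda>j. 0"]) (simp add: inF_def vanish_def)
next
  case (Suc L)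
  define c where "c = t L / G L"
  obtain A0 where A0: "inF L A0" "\<forall>k<L. pair (p k) A0 = t k - c * pair (p k) (fL L)"
    using Suc.IH[of "\<lambda>k. t k - c * pair (p k) (fL L)"] by blast
  define A where "A = (\<lambda>j. A0 j + smult c (fL L j))"
  have "inF (Suc L) A" unfolding A_def
    by (intro inF_add inF_smult fL_in inF_mono[OF A0(1)]) simp
  moreover have "pair (p k) A = t k" if "k < Suc L" for k
  proof (cases "k < L")
    case True
    then show ?thesis using A0(2) unfolding A_def pair_add_r pair_smult_r by simp
  next
    case False
    then have "k = L" using that by simp
    then show ?thesis unfolding A_def pair_add_r pair_smult_r
      using orth[OF A0(1)] pair_fL_G[of L] G_ne[of L] by (simp add: c_def)
  qed
  ultimately show ?case by blast
qed

end

context opset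
begin

lemma pair_expand: "pair Q A = (\<Sum>k\<le>degree Q. coeff Q k * pair (monom 1 k) A)"
proof -
  have "Q = (\<Sum>k\<le>degree Q. smult (coeff Q k) (monom 1 k))"
    using poly_as_sum_of_monoms[of Q] by (simp add: smult_monom)
  then have "pair Q A = pair (\<Sum>k\<le>degree Q. smult (coeff Q k) (monom 1 k)) A" by simp
  also have "\<dots> = (\<Sum>k\<le>degree Q. coeff Q k * pair (monom 1 k) A)" by (rule pair_sum)
  finally show ?thesis .
qed

lemma typeI_iff: "typeI mu r (nv L) A \<longleftrightarrow>
   inF L A \<and> (\<forall>k<L. pair (monom 1 k) A = (if k = L - 1 then 1 else 0))"
proof -
  have e: "pair (monom 1 k) A = (\<Sum>j<r. \<integral>x. x ^ k * poly (A j) x \<partial>mu j)" for k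
    unfolding pair_def by (simp add: poly_monom)
  show ?thesis unfolding typeI_def inF_def msize_nv e vanish_iff by (simp only: conj_assoc)
qed

lemma delta_p:
  assumes "\<forall>k<Suc L. pair (monom 1 k) A = (if k = L then 1 else 0)" "k < Suc L"
  shows "pair (p k) A = (if k = L then 1 else 0)"
proof -
  have dk: "degree (p k) = k" "coeff (p k) k = 1" using graded_coeff[OF graded_p] by auto
  have "pair (p k) A = (\<Sum>k'\<le>k. coeff (p k) k' * pair (monom 1 k') A)"
    using pair_expand[of "p k" A] dk by simp
  also have "\<dots> = (\<Sum>k'\<le>k. if k' = L then coeff (p k) k' else 0)"
    using assms by (intro sum.cong) auto
  also have "\<dots> = (if k = L then 1 else 0)"
    using assms(2) dk by (auto simp: sum.delta')
  finally show ?thesis .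
qed

lemma delta_x:
  assumes "\<forall>k<Suc L. pair (p k) A = (if k = L then 1 else 0)"
  shows "k < Suc L \<Longrightarrow> pair (monom 1 k) A = (if k = L then 1 else 0)"
proof (induction k rule: less_induct)
  case (less k)
  have dk: "degree (p k) = k" "coeff (p k) k = 1" using graded_coeff[OF graded_p] by auto
  have "pair (p k) A = (\<Sum>k'\<le>k. coeff (p k) k' * pair (monom 1 k') A)"
    using pair_expand[of "p k" A] dk by simp
  also have "\<dots> = (\<Sum>k'\<in>insert k {..<k}. coeff (p k) k' * pair (monom 1 k') A)"
    by (simp only: lessThan_Suc_atMost[symmetric] lessThan_Suc)
  also have "\<dots> = pair (monom 1 k) A + (\<Sum>k'<k. coeff (p k) k' * pair (monom 1 k') A)"
    using dk by (subst sum.insert) auto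
  also have "(\<Sum>k'<k. coeff (p k) k' * pair (monom 1 k') A) = 0"
  proof (intro sum.neutral ballI)
    fix y assume "y \<in> {..<k}"
    then have y: "y < k" by simp
    then have "pair (monom 1 y) A = 0" using less.IH[OF y] less.prems by simp
    then show "coeff (p k) y * pair (monom 1 y) A = 0" by simp
  qed
  finally have e: "pair (p k) A = pair (monom 1 k) A" by simp
  have "pair (p k) A = (if k = L then 1 else 0)" using assms less.prems by blast
  then show ?case unfolding e .
qed

lemma ex1_typeI: "\<exists>!A. typeI mu r (nv (Suc L)) A"
proof -
  obtain A where A: "inF (Suc L) A" "\<forall>k<Suc L. pair (p k) A = (if k = L then 1 else 0)"
    using existF[of "Suc L" "\<lambda>k. if k = L then 1 else 0"] by blast
  have tA: "typeI mu r (nv (Suc L)) A"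
    unfolding typeI_iff using A delta_x[OF A(2)] by simp
  show ?thesis
  proof (rule ex1I[where a=A])
    show "typeI mu r (nv (Suc L)) A" by (rule tA)
    fix B assume that: "typeI mu r (nv (Suc L)) B"
    show "B = A"
    proof
      fix j
      have B: "inF (Suc L) B" "\<forall>k<Suc L. pair (monom 1 k) B = (if k = L then 1 else 0)"
        using that unfolding typeI_iff by auto
      have "(\<lambda>j. B j - A j) j = 0"
      proof (rule uniqF)
        show "inF (Suc L) (\<lambda>j. B j - A j)" using B(1) A(1) by (rule inF_diff)
        show "\<forall>k<Suc L. pair (p k) (\<lambda>j. B j - A j) = 0"
          using A(2) delta_p[OF B(2)] unfolding pair_diff_r by simp
      qed
      then show "B j = A j" by simp
    qed
  qed
qed

abbreviation AA where "AA j \<equiv> AI mu r (nv (Suc j))"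

lemma AA_typeI: "typeI mu r (nv (Suc j)) (AA j)"
  unfolding AI_def by (rule theI'[OF ex1_typeI])

lemma biorth: "pair (p k) (AA j) = (if k = j then 1 else 0)"
proof -
  have A: "inF (Suc j) (AA j)" "\<forall>k<Suc j. pair (monom 1 k) (AA j) = (if k = j then 1 else 0)"
    using AA_typeI[of j] unfolding typeI_iff by auto
  show ?thesis
  proof (cases "k < Suc j")
    case True show ?thesis by (rule delta_p[OF A(2) True])
  next
    case False
    then have "inF k (AA j)" using inF_mono[OF A(1)] by simp
    then show ?thesis using orth False by simp
  qed
qed

abbreviation JJ where "JJ \<equiv> Jm mu r i"

lemma Jm_eq: "JJ l = coord p (Suc (Suc l)) ([:0,1:] * p l)"
proof -
  define g where "g = [:0,1:] * p l"
  define c where "c = coord p (Suc (Suc l)) g"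
  have dg: "degree g = Suc l" unfolding g_def using graded_coeff[OF graded_p, of l] graded_ne[OF graded_p, of l]
    by (simp add: degree_mult_eq)
  have v: "vanish (Suc (Suc l)) g" unfolding vanish_iff using dg by simp
  have ge: "g = (\<Sum>k<Suc (Suc l). smult (c k) (p k))" unfolding c_def by (rule coord_expand[OF graded_p v])
  have c0: "\<forall>k\<ge>Suc (Suc l). c k = 0" using coord_prop[OF graded_p ge] unfolding c_def by blast
  have P: "(\<forall>k>Suc l. c k = 0) \<and> g = (\<Sum>k\<le>Suc l. smult (c k) (p k))"
  proof
    show "\<forall>k>Suc l. c k = 0" using c0 by (simp add: Suc_le_eq)
    show "g = (\<Sum>k\<le>Suc l. smult (c k) (p k))" using ge unfolding lessThan_Suc_atMost .
  qed
  have U: "d = c" if "(\<forall>k>Suc l. d k = 0) \<and> g = (\<Sum>k\<le>Suc l. smult (d k) (p k))" for d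
  proof
    fix k
    show "d k = c k"
    proof (cases "k < Suc (Suc l)")
      case True
      have "g = (\<Sum>k<Suc (Suc l). smult (d k) (p k))" using conjunct2[OF that] unfolding lessThan_Suc_atMost .
      then have "coord p (Suc (Suc l)) g k = d k" by (rule coord_unique[OF graded_p _ True])
      then show ?thesis unfolding c_def by simp
    next
      case False
      then have "d k = 0" using conjunct1[OF that] by simp
      moreover have "c k = 0" using c0 False by simp
      ultimately show ?thesis by simp
    qed
  qed
  have "JJ l = c" unfolding Jm_def g_def[symmetric]
    by (rule the_equality, rule P, rule U, assumption)
  then show ?thesis unfolding c_def g_def .
qed

lemma JJ_hess: "hess JJ"
  unfolding hess_def
proof (intro allI impI)
  fix t k assume tk: "Suc t < k"
  define g where "g = [:0,1:] * p t"
  have dg: "degree g = Suc t" unfolding g_def using graded_coeff[OF graded_p, of t] graded_ne[OF graded_p, of t]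
    by (simp add: degree_mult_eq)
  have v: "vanish (Suc (Suc t)) g" unfolding vanish_iff using dg by simp
  have "\<forall>l\<ge>Suc (Suc t). coord p (Suc (Suc t)) g l = 0"
    using coord_prop[OF graded_p coord_expand[OF graded_p v]] by (rule conjunct1)
  moreover have "JJ t = coord p (Suc (Suc t)) g" using Jm_eq[of t] unfolding g_def .
  ultimately show "JJ t k = 0" using tk by (metis less_or_eq_imp_le Suc_leI)
qed

lemma JJ_rec: "recb p JJ"
  unfolding recb_def
proof
  fix k
  define g where "g = [:0,1:] * p k"
  have dg: "degree g = Suc k" unfolding g_def using graded_coeff[OF graded_p, of k] graded_ne[OF graded_p, of k]
    by (simp add: degree_mult_eq)
  have v: "vanish (Suc (Suc k)) g" unfolding vanish_iff using dg by simp
  have e: "JJ k = coord p (Suc (Suc k)) g" using Jm_eq[of k] unfolding g_def .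
  show "[:0,1:] * p k = (\<Sum>t<Suc (Suc k). smult (JJ k t) (p t))"
    unfolding e g_def[symmetric] by (rule coord_expand[OF graded_p v])
qed

end

context opset
begin

lemma spM: "space M = UNIV"
  using sets_eq_imp_space_eq[OF sM] by simp

lemma measM: fixes f :: "real \<Rightarrow> real"
  assumes "f \<in> borel_measurable borel" shows "f \<in> borel_measurable M"
  using assms measurable_cong_sets[OF sM refl, of borel] by metis

lemma poly_meas: "(\<lambda>x. poly (Q::real poly) x) \<in> borel_measurable borel"
  using continuous_on_poly[OF continuous_on_id, of UNIV Q]
  by (intro borel_measurable_continuous_onI) simp

lemma pow_meas: "(\<lambda>x::real. x ^ m) \<in> borel_measurable M"
  by (intro measM borel_measurable_continuous_onI continuous_intros)

lemma w_meas: "j < r \<Longrightarrow> w j \<in> borel_measurable M"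
  using wm measM by blast

lemma int_w: assumes j: "j < r" shows "integrable M (\<lambda>x. w j x * poly Q x)"
proof -
  have "integrable (density M (\<lambda>x. ennreal (w j x))) (\<lambda>x. poly Q x)"
    using int_poly[OF j] muD j by simp
  then show ?thesis
    using integrable_density[of "\<lambda>x. poly Q x" M "w j"] measM[OF poly_meas] w_meas[OF j] wm j
    by simp
qed

lemma integral_w: assumes j: "j < r" shows "(\<integral>x. w j x * poly Q x \<partial>M) = (\<integral>x. poly Q x \<partial>mu j)"
proof -
  have "(\<integral>x. poly Q x \<partial>mu j) = (\<integral>x. poly Q x \<partial>density M (\<lambda>x. ennreal (w j x)))"
    using muD j by simp
  also have "\<dots> = (\<integral>x. w j x * poly Q x \<partial>M)"
    using integral_density[of "\<lambda>x. poly Q x" M "w j"] measM[OF poly_meas] w_meas[OF j] wm j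
    by simp
  finally show ?thesis by simp
qed

lemma CD_expand:
  "CD mu w r i N x x * x ^ m = (\<Sum>j<N. \<Sum>i'<r. w i' x * poly (monom 1 m * p j * AA j i') x)"
  unfolding CD_def qq_def QI_def
  by (simp add: sum_distrib_left sum_distrib_right poly_mult poly_monom mult_ac)

lemma CD_meas: "(\<lambda>x. CD mu w r i N x x) \<in> borel_measurable M"
  unfolding CD_def qq_def QI_def
  using w_meas measM[OF poly_meas]
  by (intro borel_measurable_sum borel_measurable_times) auto

lemma pair_moment: "pair (monom 1 m * p j) (AA j) = Jp JJ m j j"
proof -
  have "pair (monom 1 m * p j) (AA j) = pair (\<Sum>k<Suc (j + m). smult (Jp JJ m j k) (p k)) (AA j)"
    using full_identity[OF JJ_hess JJ_rec, of m j] by simp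
  also have "\<dots> = (\<Sum>k<Suc (j + m). Jp JJ m j k * pair (p k) (AA j))" by (rule pair_sum)
  also have "\<dots> = (\<Sum>k<Suc (j + m). if k = j then Jp JJ m j k else 0)"
    using biorth by (intro sum.cong) auto
  also have "\<dots> = Jp JJ m j j" by simp
  finally show ?thesis .
qed

lemma AE_K: assumes K: "K \<in> sets borel" "emeasure M (UNIV - K) = 0"
  shows "AE x in M. x \<in> K"
proof (rule AE_I'[of "UNIV - K"])
  have "UNIV - K \<in> sets M" using K(1) sM
    by (metis sets.compl_sets space_borel)
  then show "UNIV - K \<in> null_sets M" using K(2) by (simp add: null_sets_def)
  show "{x \<in> space M. x \<notin> K} \<subseteq> UNIV - K" by auto
qed

lemma set_int_full:
  assumes K: "K \<in> sets borel" "emeasure M (UNIV - K) = 0" and f: "f \<in> borel_measurable M"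
  shows "(LINT x:K|M. f x) = (\<integral>x. f x \<partial>M)"
  unfolding set_lebesgue_integral_def
proof (rule integral_cong_AE)
  have "indicator K \<in> borel_measurable M" using K(1) sM by (simp add: measM)
  then show "(\<lambda>x. indicator K x *\<^sub>R f x) \<in> borel_measurable M" using f by (rule borel_measurable_scaleR)
  show "f \<in> borel_measurable M" by (rule f)
  show "AE x in M. indicator K x *\<^sub>R f x = f x" using AE_K[OF K] by eventually_elim simp
qed

lemma eta_moment:
  assumes K: "K \<in> sets borel" "emeasure M (UNIV - K) = 0"
  shows "(LINT x:K|M. CD mu w r i N x x * x ^ m) = (\<Sum>j<N. Jp JJ m j j)"
proof -
  have "(LINT x:K|M. CD mu w r i N x x * x ^ m) = (\<integral>x. CD mu w r i N x x * x ^ m \<partial>M)"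
    by (rule set_int_full[OF K]) (rule borel_measurable_times[OF CD_meas pow_meas])
  also have "\<dots> = (\<integral>x. (\<Sum>j<N. \<Sum>i'<r. w i' x * poly (monom 1 m * p j * AA j i') x) \<partial>M)"
    unfolding CD_expand ..
  also have "\<dots> = (\<Sum>j<N. \<Sum>i'<r. \<integral>x. w i' x * poly (monom 1 m * p j * AA j i') x \<partial>M)"
  proof -
    have "(\<integral>x. (\<Sum>j<N. \<Sum>i'<r. w i' x * poly (monom 1 m * p j * AA j i') x) \<partial>M)
       = (\<Sum>j<N. \<integral>x. (\<Sum>i'<r. w i' x * poly (monom 1 m * p j * AA j i') x) \<partial>M)"
      by (rule Bochner_Integration.integral_sum) (intro Bochner_Integration.integrable_sum int_w, simp)
    also have "\<dots> = (\<Sum>j<N. \<Sum>i'<r. \<integral>x. w i' x * poly (monom 1 m * p j * AA j i') x \<partial>M)"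
      by (intro sum.cong refl Bochner_Integration.integral_sum int_w) simp
    finally show ?thesis .
  qed
  also have "\<dots> = (\<Sum>j<N. \<Sum>i'<r. \<integral>x. poly (monom 1 m * p j) x * poly (AA j i') x \<partial>mu i')"
  proof (intro sum.cong refl)
    fix j i' assume "i' \<in> {..<r}"
    then have "(\<integral>x. w i' x * poly (monom 1 m * p j * AA j i') x \<partial>M) = (\<integral>x. poly (monom 1 m * p j * AA j i') x \<partial>mu i')"
      by (intro integral_w) simp
    then show "(\<integral>x. w i' x * poly (monom 1 m * p j * AA j i') x \<partial>M) = (\<integral>x. poly (monom 1 m * p j) x * poly (AA j i') x \<partial>mu i')"
      by (simp only: poly_mult)
  qed
  also have "\<dots> = (\<Sum>j<N. pair (monom 1 m * p j) (AA j))" unfolding pair_def ..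
  also have "\<dots> = (\<Sum>j<N. Jp JJ m j j)" using pair_moment by simp
  finally show ?thesis .
qed

end

lemma map_of_real_mult:
  "map_poly (of_real :: real \<Rightarrow> complex) (A * B) = map_poly of_real A * map_poly of_real B"
  by (simp add: poly_eq_iff coeff_map_poly coeff_mult)

lemma poly_map_of_real: "poly (map_poly (of_real :: real \<Rightarrow> complex) P) (of_real x) = of_real (poly P x)"
  by (induction P) (auto simp: map_poly_pCons)

lemma real_split:
  fixes P :: "real poly"
  assumes "lead_coeff P = 1"
    and "\<forall>z::complex. poly (map_poly complex_of_real P) z = 0 \<longrightarrow> z \<in> complex_of_real ` K"
  shows "\<exists>z. (\<forall>t<degree P. z t \<in> K) \<and> P = nb z (degree P)"
  using assms
proof (induction "degree P" arbitrary: P)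
  case 0
  note h0 = 0
  have "coeff P n = coeff 1 n" for n
  proof (cases n)
    case 0 then show ?thesis using h0 by simp
  next
    case (Suc m) then show ?thesis using h0 by (simp add: coeff_eq_0)
  qed
  then have "P = 1" by (simp add: poly_eq_iff)
  then show ?case using 0 by (auto simp: nb_def)
next
  case (Suc d P)
  have dm: "degree (map_poly complex_of_real P) = degree P"
    by (rule degree_map_poly) simp
  then have "\<not> constant (poly (map_poly complex_of_real P))"
    using constant_degree Suc.hyps(2) by (metis nat.distinct(1))
  then obtain w where "poly (map_poly complex_of_real P) w = 0"
    using fundamental_theorem_of_algebra by blast
  then obtain y where y: "y \<in> K" "w = complex_of_real y" using Suc.prems(2) by blast
  have "complex_of_real (poly P y) = 0" using poly_map_of_real[of P y] y
    \<open>poly (map_poly complex_of_real P) w = 0\<close> by simp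
  then have "poly P y = 0" by simp
  then have "[:-y, 1:] dvd P" by (simp add: dvd_iff_poly_eq_0)
  then obtain Q where Q: "P = [:-y, 1:] * Q" by (elim dvdE)
  have Q0: "Q \<noteq> 0" using Q Suc.prems(1) by auto
  have "degree P = degree [:-y, 1:] + degree Q" unfolding Q by (rule degree_mult_eq) (use Q0 in auto)
  then have dQ: "degree Q = d" using Suc.hyps(2) by simp
  have "lead_coeff P = lead_coeff [:-y, 1:] * lead_coeff Q" unfolding Q by (rule lead_coeff_mult)
  then have lQ: "lead_coeff Q = 1" using Suc.prems(1) by simp
  have rQ: "\<forall>z::complex. poly (map_poly complex_of_real Q) z = 0 \<longrightarrow> z \<in> complex_of_real ` K"
  proof (intro allI impI)
    fix z :: complex assume "poly (map_poly complex_of_real Q) z = 0"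
    then have "poly (map_poly complex_of_real P) z = 0" unfolding Q map_of_real_mult by simp
    then show "z \<in> complex_of_real ` K" using Suc.prems(2) by blast
  qed
  obtain z' where z': "\<forall>t<degree Q. z' t \<in> K" "Q = nb z' (degree Q)"
    using Suc.hyps(1)[OF dQ[symmetric] lQ rQ] by blast
  define z where "z = z'(d := y)"
  have "nb z d = nb z' d" unfolding nb_def z_def by (intro prod.cong) auto
  then have "nb z (Suc d) = Q * [:-y, 1:]" using z' dQ by (simp add: nb_Suc z_def)
  then have "P = nb z (degree P)" using Q Suc.hyps(2) by (simp add: mult.commute)
  moreover have "\<forall>t<degree P. z t \<in> K" using z' dQ y Suc.hyps(2) by (auto simp: z_def less_Suc_eq)
  ultimately show ?case by blast
qed

lemma order_nb: "order y (nb z N) = card {t. t < N \<and> z t = y}"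
proof (induction N)
  case 0 then show ?case by (simp add: nb_def order_0I)
next
  case (Suc N)
  have ne: "nb z N * [:- z N, 1:] \<noteq> 0" using graded_ne[OF graded_nb, of z "Suc N"] by (simp add: nb_Suc)
  have o1: "order y [:- z N, 1:] = (if z N = y then 1 else 0)"
  proof (cases "z N = y")
    case True then show ?thesis using order_power_n_n[of y 1] by simp
  next
    case False
    have "order y [:- z N, 1:] = 0" by (rule order_0I) (use False in simp)
    then show ?thesis using False by simp
  qed
  have "{t. t < Suc N \<and> z t = y} = {t. t < N \<and> z t = y} \<union> (if z N = y then {N} else {})"
    by (auto simp: less_Suc_eq)
  then have "card {t. t < Suc N \<and> z t = y} = card {t. t < N \<and> z t = y} + (if z N = y then 1 else 0)"
    by (auto simp: card_insert_if)
  then show ?case unfolding nb_Suc order_mult[OF ne] o1 Suc by simp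
qed

lemma roots_nb: "{y. poly (nb z N) y = 0} = z ` {..<N}"
  unfolding nb_def poly_prod by (auto simp: prod_zero_iff)

lemma sum_roots_nb:
  "(\<Sum>y\<in>{y. poly (nb z N) y = 0}. real (order y (nb z N)) * h y) = (\<Sum>t<N. h (z t))"
proof -
  have "(\<Sum>t<N. h (z t)) = (\<Sum>y\<in>z ` {..<N}. \<Sum>t\<in>{t. t \<in> {..<N} \<and> z t = y}. h (z t))"
    by (rule sum.image_gen) simp
  also have "\<dots> = (\<Sum>y\<in>z ` {..<N}. real (card {t. t < N \<and> z t = y}) * h y)"
    by (intro sum.cong refl) auto
  finally show ?thesis unfolding roots_nb order_nb by simp
qed

context opset
begin

definition rootsK :: "real set \<Rightarrow> nat \<Rightarrow> bool" where
  "rootsK K N \<longleftrightarrow> (\<forall>z::complex. poly (map_poly complex_of_real (p N)) z = 0 \<longrightarrow> z \<in> complex_of_real ` K)"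

lemma nu_rep:
  assumes "rootsK K N"
  shows "\<exists>z. (\<forall>t<N. z t \<in> K) \<and> p N = nb z N \<and> (\<forall>h. nu_int mu r i N h = (\<Sum>t<N. h (z t)) / real N)"
proof -
  have lc: "lead_coeff (p N) = 1" and dg: "degree (p N) = N"
    using graded_coeff[OF graded_p, of N] by auto
  obtain z where z: "\<forall>t<degree (p N). z t \<in> K" "p N = nb z (degree (p N))"
    using real_split[OF lc, of K] assms unfolding rootsK_def by blast
  have "nu_int mu r i N h = (\<Sum>t<N. h (z t)) / real N" for h
    unfolding nu_int_def using sum_roots_nb[of z N h] z(2) dg by simp
  then show ?thesis using z dg by auto
qed

lemma nu_moment:
  assumes "rootsK K N"
  shows "nu_int mu r i N (\<lambda>x. x ^ m) = (\<Sum>l<N. Jt JJ N m l l) / real N"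
proof -
  obtain z where z: "\<forall>t<N. z t \<in> K" "p N = nb z N" "\<forall>h. nu_int mu r i N h = (\<Sum>t<N. h (z t)) / real N"
    using nu_rep[OF assms] by blast
  define P where "P = p N"
  have P0: "P \<noteq> 0" unfolding P_def by (rule graded_ne[OF graded_p])
  have dP: "degree P = N" unfolding P_def using graded_coeff[OF graded_p] by blast
  have "(\<Sum>t<N. z t ^ m) = trc (nb z) N (Tm P m)"
    using trc_newton[of P z N m] z(2) unfolding P_def by simp
  also have "\<dots> = trc p N (Tm P m)"
  proof (rule trc_invariant[symmetric, OF graded_p graded_nb])
    show "\<forall>g. vanish N g \<longrightarrow> vanish N (Tm P m g)" using Tm_vanish[OF P0] dP by simp
    show "\<forall>g h. Tm P m (g + h) = Tm P m g + Tm P m h" using Tm_add[OF P0] by simp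
    show "\<forall>a g. Tm P m (smult a g) = smult a (Tm P m g)" using Tm_smult[OF P0] by simp
  qed
  also have "\<dots> = (\<Sum>l<N. Jt JJ N m l l)"
    unfolding P_def by (rule trc_pb[OF JJ_hess JJ_rec graded_p])
  finally show ?thesis using z(3) by simp
qed

lemma CDx_int: "integrable M (\<lambda>x. CD mu w r i N x x * x ^ m)"
  unfolding CD_expand by (intro Bochner_Integration.integrable_sum int_w) simp

lemma psum_meas: "(\<lambda>x. \<Sum>q\<le>d. a q * x ^ q) \<in> borel_measurable M"
  by (intro borel_measurable_sum borel_measurable_times borel_measurable_const pow_meas)

lemma eta_poly:
  assumes K: "K \<in> sets borel" "emeasure M (UNIV - K) = 0"
  shows "eta_int M mu w r i K N (\<lambda>x. \<Sum>q\<le>d. a q * x ^ q) = (\<Sum>q\<le>d. a q * eta_int M mu w r i K N (\<lambda>x. x ^ q))"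
proof -
  have "(LINT x:K|M. CD mu w r i N x x * (\<Sum>q\<le>d. a q * x ^ q)) = (\<integral>x. CD mu w r i N x x * (\<Sum>q\<le>d. a q * x ^ q) \<partial>M)"
    by (rule set_int_full[OF K]) (intro borel_measurable_times CD_meas psum_meas)
  also have "\<dots> = (\<integral>x. (\<Sum>q\<le>d. a q * (CD mu w r i N x x * x ^ q)) \<partial>M)"
    by (simp add: sum_distrib_left mult_ac)
  also have "\<dots> = (\<Sum>q\<le>d. a q * (\<integral>x. CD mu w r i N x x * x ^ q \<partial>M))"
    by (subst Bochner_Integration.integral_sum) (auto intro: integrable_mult_right CDx_int)
  also have "\<dots> = (\<Sum>q\<le>d. a q * (LINT x:K|M. CD mu w r i N x x * x ^ q))"
  proof (intro sum.cong refl arg_cong[where f="\<lambda>u. a _ * u"])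
    fix q
    show "(\<integral>x. CD mu w r i N x x * x ^ q \<partial>M) = (LINT x:K|M. CD mu w r i N x x * x ^ q)"
      by (rule set_int_full[OF K, symmetric]) (rule borel_measurable_times[OF CD_meas pow_meas])
  qed
  finally show ?thesis unfolding eta_int_def by (simp add: sum_divide_distrib)
qed

lemma nu_poly:
  assumes "rootsK K N"
  shows "nu_int mu r i N (\<lambda>x. \<Sum>q\<le>d. a q * x ^ q) = (\<Sum>q\<le>d. a q * nu_int mu r i N (\<lambda>x. x ^ q))"
proof -
  obtain z where z: "\<forall>h. nu_int mu r i N h = (\<Sum>t<N. h (z t)) / real N"
    using nu_rep[OF assms] by blast
  show ?thesis unfolding z[rule_format]
    by (simp add: sum_distrib_left sum_divide_distrib mult_ac sum.swap[of _ "{..<N}"])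
qed

lemma mono_diff:
  assumes b: "bandb JJ" and K: "K \<in> sets borel" "emeasure M (UNIV - K) = 0"
  shows "\<exists>C. \<forall>N. rootsK K N \<longrightarrow>
     \<bar>nu_int mu r i N (\<lambda>x. x ^ m) - eta_int M mu w r i K N (\<lambda>x. x ^ m)\<bar> \<le> C / real N"
proof -
  obtain C where C: "\<And>N. \<bar>(\<Sum>j<N. Jt JJ N m j j) - (\<Sum>j<N. Jp JJ m j j)\<bar> \<le> C"
    using trace_diff_bound[OF JJ_hess b, of m] by blast
  show ?thesis
  proof (intro exI allI impI)
    fix N assume R: "rootsK K N"
    have "nu_int mu r i N (\<lambda>x. x ^ m) - eta_int M mu w r i K N (\<lambda>x. x ^ m)
       = ((\<Sum>j<N. Jt JJ N m j j) - (\<Sum>j<N. Jp JJ m j j)) / real N"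
      unfolding nu_moment[OF R] eta_int_def eta_moment[OF K] by (simp add: diff_divide_distrib)
    also have "\<bar>\<dots>\<bar> \<le> C / real N"
      using C[of N] by (simp add: divide_right_mono)
    finally show "\<bar>nu_int mu r i N (\<lambda>x. x ^ m) - eta_int M mu w r i K N (\<lambda>x. x ^ m)\<bar> \<le> C / real N" .
  qed
qed

end

context opset
begin

lemma ind_meas:
  fixes f :: "real \<Rightarrow> real"
  assumes Kb: "K \<in> sets borel" and cf: "continuous_on K f"
  shows "(\<lambda>x. indicator K x * f x) \<in> borel_measurable M"
  using measM[OF borel_measurable_continuous_on_indicator[OF Kb cf]] by simp

lemma ind_bound:
  fixes f :: "real \<Rightarrow> real"
  assumes "compact K" "continuous_on K f"
  shows "\<exists>B\<ge>0. \<forall>x. \<bar>indicator K x * f x\<bar> \<le> B"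
proof -
  have "bounded (f ` K)" using compact_continuous_image[OF assms(2,1)] by (rule compact_imp_bounded)
  then obtain B where B: "\<forall>y\<in>f ` K. \<bar>y\<bar> \<le> B" unfolding bounded_real by blast
  show ?thesis
  proof (intro exI[of _ "max B 0"] conjI allI)
    fix x show "\<bar>indicator K x * f x\<bar> \<le> max B 0"
      using B by (cases "x \<in> K") auto
  qed simp
qed

lemma int_ind:
  fixes f :: "real \<Rightarrow> real"
  assumes Kb: "K \<in> sets borel" "compact K" and cf: "continuous_on K f"
    and CDi: "integrable M (\<lambda>x. CD mu w r i N x x)"
  shows "integrable M (\<lambda>x. indicator K x *\<^sub>R (CD mu w r i N x x * f x))"
proof -
  obtain B where B: "B \<ge> 0" "\<forall>x. \<bar>indicator K x * f x\<bar> \<le> B" using ind_bound[OF Kb(2) cf] by blast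
  show ?thesis
  proof (rule Bochner_Integration.integrable_bound[OF integrable_mult_right[OF CDi, of B]])
    show "(\<lambda>x. indicator K x *\<^sub>R (CD mu w r i N x x * f x)) \<in> borel_measurable M"
      using borel_measurable_times[OF CD_meas ind_meas[OF Kb(1) cf]] by (simp add: mult_ac)
    show "AE x in M. norm (indicator K x *\<^sub>R (CD mu w r i N x x * f x)) \<le> norm (B * CD mu w r i N x x)"
    proof (rule AE_I2)
      fix x
      have "\<bar>indicator K x * f x\<bar> * \<bar>CD mu w r i N x x\<bar> \<le> B * \<bar>CD mu w r i N x x\<bar>"
        using B by (intro mult_right_mono) auto
      then show "norm (indicator K x *\<^sub>R (CD mu w r i N x x * f x)) \<le> norm (B * CD mu w r i N x x)"
        using B by (simp add: abs_mult mult_ac)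
    qed
  qed
qed

lemma eta_approx:
  fixes f g :: "real \<Rightarrow> real"
  assumes d0: "\<delta> \<ge> 0" and Kb: "K \<in> sets borel" "compact K" and cf: "continuous_on K f" and cg: "continuous_on K g"
    and fg: "\<forall>x\<in>K. \<bar>f x - g x\<bar> \<le> \<delta>"
    and CDi: "integrable M (\<lambda>x. CD mu w r i N x x)"
    and CDb: "(\<integral>x. \<bar>CD mu w r i N x x\<bar> \<partial>M) \<le> B"
    and N: "N > 0"
  shows "\<bar>eta_int M mu w r i K N f - eta_int M mu w r i K N g\<bar> \<le> \<delta> * B / real N"
proof -
  let ?C = "\<lambda>x. CD mu w r i N x x"
  have "(LINT x:K|M. ?C x * f x) - (LINT x:K|M. ?C x * g x)
      = (\<integral>x. indicator K x *\<^sub>R (?C x * f x) - indicator K x *\<^sub>R (?C x * g x) \<partial>M)"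
    unfolding set_lebesgue_integral_def
    by (rule Bochner_Integration.integral_diff[symmetric]) (intro int_ind[OF Kb cf CDi] int_ind[OF Kb cg CDi])+
  also have "\<bar>\<dots>\<bar> \<le> (\<integral>x. \<delta> * \<bar>?C x\<bar> \<partial>M)"
  proof (rule integral_abs_bound_integral)
    show "integrable M (\<lambda>x. indicator K x *\<^sub>R (?C x * f x) - indicator K x *\<^sub>R (?C x * g x))"
      by (intro Bochner_Integration.integrable_diff int_ind[OF Kb cf CDi] int_ind[OF Kb cg CDi])
    show "integrable M (\<lambda>x. \<delta> * \<bar>?C x\<bar>)" by (intro integrable_mult_right integrable_abs CDi)
    fix x
    have "\<bar>indicator K x * (f x - g x)\<bar> \<le> \<delta>" using fg d0 by (cases "x \<in> K") auto
    then have "\<bar>indicator K x * (f x - g x)\<bar> * \<bar>?C x\<bar> \<le> \<delta> * \<bar>?C x\<bar>"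
      by (intro mult_right_mono) auto
    moreover have "indicator K x *\<^sub>R (?C x * f x) - indicator K x *\<^sub>R (?C x * g x)
        = (indicator K x * (f x - g x)) * ?C x" by (simp add: algebra_simps)
    ultimately show "\<bar>indicator K x *\<^sub>R (?C x * f x) - indicator K x *\<^sub>R (?C x * g x)\<bar> \<le> \<delta> * \<bar>?C x\<bar>"
      by (simp only: abs_mult)
  qed
  also have "\<dots> = \<delta> * (\<integral>x. \<bar>?C x\<bar> \<partial>M)" by simp
  also have "\<dots> \<le> \<delta> * B" using CDb d0 by (intro mult_left_mono) auto
  finally have "\<bar>(LINT x:K|M. ?C x * f x) - (LINT x:K|M. ?C x * g x)\<bar> \<le> \<delta> * B" .
  then show ?thesis unfolding eta_int_def using N
    by (simp add: diff_divide_distrib[symmetric] divide_right_mono)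
qed

lemma nu_approx:
  assumes R: "rootsK K N" and fg: "\<forall>x\<in>K. \<bar>f x - g x\<bar> \<le> \<delta>" and N: "N > 0"
  shows "\<bar>nu_int mu r i N f - nu_int mu r i N g\<bar> \<le> \<delta>"
proof -
  obtain z where z: "\<forall>t<N. z t \<in> K" "\<forall>h. nu_int mu r i N h = (\<Sum>t<N. h (z t)) / real N"
    using nu_rep[OF R] by blast
  have "\<bar>(\<Sum>t<N. f (z t)) - (\<Sum>t<N. g (z t))\<bar> \<le> (\<Sum>t<N. \<bar>f (z t) - g (z t)\<bar>)"
    by (simp add: sum_subtractf[symmetric] sum_abs)
  also have "\<dots> \<le> (\<Sum>t<N. \<delta>)" using z(1) fg by (intro sum_mono) auto
  also have "\<dots> = real N * \<delta>" by simp
  finally have "\<bar>(\<Sum>t<N. f (z t)) - (\<Sum>t<N. g (z t))\<bar> / real N \<le> \<delta>"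
    using N by (simp add: divide_le_eq mult.commute)
  then show ?thesis unfolding z(2)[rule_format] by (simp add: diff_divide_distrib[symmetric])
qed

end

theorem corollary1:
  fixes r :: nat and mu :: "nat \<Rightarrow> real measure" and M :: "real measure"
    and w :: "nat \<Rightarrow> real \<Rightarrow> real" and i :: "nat \<Rightarrow> nat"
    and n :: "nat \<Rightarrow> nat" and K :: "real set"
  assumes "r \<ge> 1"
    and "sets M = sets borel"
    and "\<forall>j<r. w j \<in> borel_measurable borel \<and> (\<forall>x. w j x \<ge> 0)"
    and "\<forall>j<r. mu j = density M (\<lambda>x. ennreal (w j x))"
    and "\<forall>j<r. \<forall>k::nat. integrable (mu j) (\<lambda>x. x ^ k)"
    and "perfect_system mu r"
    and "\<forall>l. i l < r"
    and "\<forall>R::real. R \<ge> 0 \<longrightarrow> (\<exists>B. \<forall>a b. \<bar>real a - real b\<bar> \<le> R \<longrightarrow> \<bar>Jm mu r i a b\<bar> \<le> B)"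
    and "strict_mono n" and "\<forall>k. n k > 0"
    and "compact K"
    and "emeasure M (UNIV - K) = 0"
    and "\<forall>k. \<forall>z::complex. poly (map_poly complex_of_real (pp mu r i (n k))) z = 0
            \<longrightarrow> z \<in> complex_of_real ` K"
    and "\<exists>C::real. \<forall>k. (\<integral>\<^sup>+ x. ennreal \<bar>CD mu w r i (n k) x x\<bar> \<partial>M) \<le> ennreal (C * real (n k))"
  shows "(\<forall>f::real \<Rightarrow> real. continuous_on K f \<longrightarrow>
            (\<lambda>k. \<bar>nu_int mu r i (n k) f - eta_int M mu w r i K (n k) f\<bar>) \<longlonglongrightarrow> 0)
    \<and> (\<forall>\<nu>::real measure. prob_space \<nu> \<and> sets \<nu> = sets borel \<and> emeasure \<nu> (UNIV - K) = 0 \<longrightarrow>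
         ((\<forall>f::real \<Rightarrow> real. continuous_on UNIV f \<and> bounded (range f) \<longrightarrow>
              (\<lambda>k. nu_int mu r i (n k) f) \<longlonglongrightarrow> integral\<^sup>L \<nu> f)
          \<longleftrightarrow>
          (\<forall>f::real \<Rightarrow> real. continuous_on UNIV f \<and> bounded (range f) \<longrightarrow>
              (\<lambda>k. eta_int M mu w r i K (n k) f) \<longlonglongrightarrow> integral\<^sup>L \<nu> f)))"
proof -
  have loc: "opset r mu M w i" unfolding opset_def using assms by auto
  interpret opset r mu M w i by (rule loc)
  have b: "bandb (Jm mu r i)" using assms(8) unfolding bandb_def .
  have Kb: "K \<in> sets borel" using assms(11) by (simp add: compact_imp_closed borel_closed)
  have KN: "emeasure M (UNIV - K) = 0" by (rule assms(12))
  have R: "rootsK K (n k)" for k using assms(13) unfolding rootsK_def by blast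
  have npos: "0 < n k" for k using assms(10) by blast
  obtain C0 where C0: "\<And>k. (\<integral>\<^sup>+ x. ennreal \<bar>CD mu w r i (n k) x x\<bar> \<partial>M) \<le> ennreal (C0 * real (n k))"
    using assms(14) by blast
  define C1 where "C1 = max C0 0"
  have C1: "C1 \<ge> 0" unfolding C1_def by simp
  have nn: "(\<integral>\<^sup>+ x. ennreal \<bar>CD mu w r i (n k) x x\<bar> \<partial>M) \<le> ennreal (C1 * real (n k))" for k
  proof -
    have "C0 * real (n k) \<le> C1 * real (n k)" unfolding C1_def by (intro mult_right_mono) auto
    then show ?thesis using C0[of k] by (meson ennreal_leI order_trans)
  qed
  have CDi: "integrable M (\<lambda>x. CD mu w r i (n k) x x)" for k
  proof (rule integrableI_bounded[OF CD_meas])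
    have "(\<integral>\<^sup>+ x. ennreal (norm (CD mu w r i (n k) x x)) \<partial>M) \<le> ennreal (C1 * real (n k))"
      using nn[of k] by simp
    also have "\<dots> < \<infinity>" by simp
    finally show "(\<integral>\<^sup>+ x. ennreal (norm (CD mu w r i (n k) x x)) \<partial>M) < \<infinity>" .
  qed
  have CDb: "(\<integral>x. \<bar>CD mu w r i (n k) x x\<bar> \<partial>M) \<le> C1 * real (n k)" for k
  proof -
    have "(\<integral>\<^sup>+ x. ennreal \<bar>CD mu w r i (n k) x x\<bar> \<partial>M) = ennreal (\<integral>x. \<bar>CD mu w r i (n k) x x\<bar> \<partial>M)"
      by (rule nn_integral_eq_integral) (auto intro: integrable_abs CDi)
    then have "ennreal (\<integral>x. \<bar>CD mu w r i (n k) x x\<bar> \<partial>M) \<le> ennreal (C1 * real (n k))"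
      using nn[of k] by simp
    then show ?thesis using C1 by (simp add: ennreal_le_iff)
  qed
  have lim0: "(\<lambda>k. C / real (n k)) \<longlonglongrightarrow> 0" for C :: real
    using LIMSEQ_subseq_LIMSEQ[OF lim_const_over_n assms(9)] by (simp add: o_def)
  have mono0: "(\<lambda>k. nu_int mu r i (n k) (\<lambda>x. x ^ q) - eta_int M mu w r i K (n k) (\<lambda>x. x ^ q)) \<longlonglongrightarrow> 0" for q
  proof -
    obtain C where C: "\<And>N. rootsK K N \<Longrightarrow>
       \<bar>nu_int mu r i N (\<lambda>x. x ^ q) - eta_int M mu w r i K N (\<lambda>x. x ^ q)\<bar> \<le> C / real N"
      using mono_diff[OF b Kb KN, of q] by blast
    show ?thesis
    proof (rule Lim_null_comparison[OF _ lim0[of C]])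
      show "\<forall>\<^sub>F k in sequentially. norm (nu_int mu r i (n k) (\<lambda>x. x ^ q) - eta_int M mu w r i K (n k) (\<lambda>x. x ^ q)) \<le> C / real (n k)"
        using C[OF R] by simp
    qed
  qed
  have polyA: "(\<lambda>k. nu_int mu r i (n k) (\<lambda>x. \<Sum>q\<le>d. a q * x ^ q) - eta_int M mu w r i K (n k) (\<lambda>x. \<Sum>q\<le>d. a q * x ^ q)) \<longlonglongrightarrow> 0"
    for a d
  proof -
    have e: "nu_int mu r i (n k) (\<lambda>x. \<Sum>q\<le>d. a q * x ^ q) - eta_int M mu w r i K (n k) (\<lambda>x. \<Sum>q\<le>d. a q * x ^ q)
       = (\<Sum>q\<le>d. a q * (nu_int mu r i (n k) (\<lambda>x. x ^ q) - eta_int M mu w r i K (n k) (\<lambda>x. x ^ q)))" for k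
      unfolding nu_poly[OF R] eta_poly[OF Kb KN] by (simp add: sum_subtractf right_diff_distrib)
    have "(\<lambda>k. \<Sum>q\<le>d. a q * (nu_int mu r i (n k) (\<lambda>x. x ^ q) - eta_int M mu w r i K (n k) (\<lambda>x. x ^ q)))
        \<longlonglongrightarrow> (\<Sum>q\<le>d. a q * 0)"
      by (intro tendsto_sum tendsto_mult tendsto_const mono0)
    then show ?thesis unfolding e by simp
  qed
  have part1: "(\<lambda>k. \<bar>nu_int mu r i (n k) f - eta_int M mu w r i K (n k) f\<bar>) \<longlonglongrightarrow> 0"
    if cf: "continuous_on K f" for f :: "real \<Rightarrow> real"
  proof (rule LIMSEQ_I)
    fix \<epsilon> :: real assume e0: "0 < \<epsilon>"
    define \<delta> where "\<delta> = \<epsilon> / (2 * (1 + C1))"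
    have d0: "0 < \<delta>" unfolding \<delta>_def using e0 C1 by simp
    have nz: "1 + C1 \<noteq> 0" using C1 by simp
    have "\<delta> * (1 + C1) = (\<epsilon> * (1 + C1)) / (2 * (1 + C1))" unfolding \<delta>_def by (simp only: times_divide_eq_left)
    also have "\<dots> = \<epsilon> / 2" using nz by (rule nonzero_mult_divide_mult_cancel_right)
    finally have "\<delta> * (1 + C1) = \<epsilon> / 2" .
    then have dC: "\<delta> + \<delta> * C1 = \<epsilon> / 2" by (simp add: algebra_simps)
    obtain g where g: "real_polynomial_function g" "\<And>x. x \<in> K \<Longrightarrow> \<bar>f x - g x\<bar> < \<delta>"
      using Stone_Weierstrass_real_polynomial_function[OF assms(11) cf d0] by blast
    obtain a d where gd: "g = (\<lambda>x. \<Sum>q\<le>d. a q * x ^ q)"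
      using g(1) unfolding real_polynomial_function_iff_sum by blast
    have cg: "continuous_on K g" unfolding gd by (intro continuous_intros)
    have fg: "\<forall>x\<in>K. \<bar>f x - g x\<bar> \<le> \<delta>" using g(2) by (simp add: less_imp_le)
    obtain no where no: "\<And>k. k \<ge> no \<Longrightarrow> norm ((nu_int mu r i (n k) g - eta_int M mu w r i K (n k) g) - 0) < \<epsilon> / 2"
      using LIMSEQ_D[OF polyA[of a d], of "\<epsilon> / 2"] e0 unfolding gd by auto
    show "\<exists>no. \<forall>k\<ge>no. norm (\<bar>nu_int mu r i (n k) f - eta_int M mu w r i K (n k) f\<bar> - 0) < \<epsilon>"
    proof (intro exI allI impI)
      fix k assume k: "k \<ge> no"
      have A: "\<bar>nu_int mu r i (n k) f - nu_int mu r i (n k) g\<bar> \<le> \<delta>"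
        by (rule nu_approx[OF R fg npos])
      have B: "\<bar>eta_int M mu w r i K (n k) f - eta_int M mu w r i K (n k) g\<bar> \<le> \<delta> * (C1 * real (n k)) / real (n k)"
        by (rule eta_approx[OF less_imp_le[OF d0] Kb assms(11) cf cg fg CDi CDb npos])
      also have "\<dots> = \<delta> * C1" using npos[of k] by simp
      finally have B': "\<bar>eta_int M mu w r i K (n k) f - eta_int M mu w r i K (n k) g\<bar> \<le> \<delta> * C1" .
      have Cc: "\<bar>nu_int mu r i (n k) g - eta_int M mu w r i K (n k) g\<bar> < \<epsilon> / 2" using no[OF k] by simp
      have "\<bar>nu_int mu r i (n k) f - eta_int M mu w r i K (n k) f\<bar> < \<epsilon>"
        using A B' Cc dC by linarith
      then show "norm (\<bar>nu_int mu r i (n k) f - eta_int M mu w r i K (n k) f\<bar> - 0) < \<epsilon>" by simp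
    qed
  qed
  show ?thesis
  proof (intro conjI allI impI)
    fix f :: "real \<Rightarrow> real" assume "continuous_on K f"
    then show "(\<lambda>k. \<bar>nu_int mu r i (n k) f - eta_int M mu w r i K (n k) f\<bar>) \<longlonglongrightarrow> 0" by (rule part1)
  next
    fix \<nu> :: "real measure"
    have dlim: "(\<lambda>k. nu_int mu r i (n k) f - eta_int M mu w r i K (n k) f) \<longlonglongrightarrow> 0"
      if "continuous_on UNIV f" for f
    proof -
      have "continuous_on K f" using that by (rule continuous_on_subset) simp
      then show ?thesis using part1 tendsto_rabs_zero_iff by blast
    qed
    show "(\<forall>f. continuous_on UNIV f \<and> bounded (range f) \<longrightarrow> (\<lambda>k. nu_int mu r i (n k) f) \<longlonglongrightarrow> integral\<^sup>L \<nu> f) =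
          (\<forall>f. continuous_on UNIV f \<and> bounded (range f) \<longrightarrow> (\<lambda>k. eta_int M mu w r i K (n k) f) \<longlonglongrightarrow> integral\<^sup>L \<nu> f)"
    proof (intro iffI allI impI)
      fix f :: "real \<Rightarrow> real"
      assume H: "\<forall>f. continuous_on UNIV f \<and> bounded (range f) \<longrightarrow> (\<lambda>k. nu_int mu r i (n k) f) \<longlonglongrightarrow> integral\<^sup>L \<nu> f"
        and f: "continuous_on UNIV f \<and> bounded (range f)"
      have "(\<lambda>k. nu_int mu r i (n k) f - (nu_int mu r i (n k) f - eta_int M mu w r i K (n k) f)) \<longlonglongrightarrow> integral\<^sup>L \<nu> f - 0"
        using H f dlim[of f] by (intro tendsto_diff) auto
      then show "(\<lambda>k. eta_int M mu w r i K (n k) f) \<longlonglongrightarrow> integral\<^sup>L \<nu> f" by simp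
    next
      fix f :: "real \<Rightarrow> real"
      assume H: "\<forall>f. continuous_on UNIV f \<and> bounded (range f) \<longrightarrow> (\<lambda>k. eta_int M mu w r i K (n k) f) \<longlonglongrightarrow> integral\<^sup>L \<nu> f"
        and f: "continuous_on UNIV f \<and> bounded (range f)"
      have "(\<lambda>k. eta_int M mu w r i K (n k) f + (nu_int mu r i (n k) f - eta_int M mu w r i K (n k) f)) \<longlonglongrightarrow> integral\<^sup>L \<nu> f + 0"
        using H f dlim[of f] by (intro tendsto_add) auto
      then show "(\<lambda>k. nu_int mu r i (n k) f) \<longlonglongrightarrow> integral\<^sup>L \<nu> f" by simp
    qed
  qed
qed

end
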